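(* Let $D$ be an integral domain, $T$ an overring of $D$, $\star$ a semistar operation on $D$ and $\star'$ a semistar operation on $T$. The following are equivalent: (i) $T$ is $(\star,\star')$-flat over $D$; (ii) $T$ is $(\star,\star')$-linked to $D$ and, for each nonzero prime ideal $P$ of $D$, either $(PT)^{\star'_f}=T^{\star'}$ or $T\subseteq D_P$; (iii) $T$ is $(\star,\star')$-linked to $D$ and, for each nonzero $x\in T$, $((D:_DxD)T)^{\star'_f}=T^{\star'}$, where $(D:_DxD)=\{d\in D: dx\in D\}$; (iv) $T$ is $(\star,\star')$-linked to $D$ and $T^{\widetilde{\star'}}=\bigcap\{D_{Q\cap D}: Q\in\mathcal M(\star'_f)\}$; (v) $T$ is $(\star,\star')$-linked to $D$ and there exists a multiplicative system $\Sigma$ of nonzero ideals of $D$ such that $T^{\widetilde{\star'}}=D^{\tilde\star}_{\Sigma^{\tilde\star}}$ and $(IT)^{\star'_f}=T^{\star'}$ for every $I\in\Sigma$. Moreover, each of (i)–(v) follows from: (vi) $T$ is $(\star,\star')$-linked to $D$ and, for each quasi-$\star_f$-prime ideal $P$ of $D$, $T_{D\setminus P}$ is flat over $D_P$.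
   Context: Let $D$ be an integral domain with quotient field $K$. $\overline{\mathbf F}(D)$ denotes the set of all nonzero $D$-submodules of $K$ and $\mathbf f(D)$ the set of nonzero finitely generated $D$-submodules of $K$. A semistar operation on $D$ is a map $\star:\overline{\mathbf F}(D)\to\overline{\mathbf F}(D)$, $E\mapsto E^\star$, such that for all $0\ne x\in K$ and $E,F\in\overline{\mathbf F}(D)$: (1) $(xE)^\star=xE^\star$; (2) $E\subseteq F\Rightarrow E^\star\subseteq F^\star$; (3) $E\subseteq E^\star$ and $(E^\star)^\star=E^\star$. $\star_f$ is defined by $E^{\star_f}=\bigcup\{F^\star:F\in\mathbf f(D),F\subseteq E\}$. A nonzero ideal $I$ of $D$ is a quasi-$\star$-ideal if $I^\star\cap D=I$; a quasi-$\star$-prime is a prime quasi-$\star$-ideal; a quasi-$\star$-maximal ideal is a maximal element among proper quasi-$\star$-ideals; $\mathcal M(\star_f)$ is the set of quasi-$\star_f$-maximal ideals of $D$ and $E^{\tilde\star}=\bigcap\{ED_Q:Q\in\mathcal M(\star_f)\}$ (equal to $K$ if $\mathcal M(\star_f)=\emptyset$). An overring of $D$ is a ring $T$ with $D\subseteq T\subseteq K$; all notions are defined analogously on $T$ (so $\mathcal M(\star'_f)$ and $\widetilde{\star'}$ refer to $T$). $T$ is $(\star,\star')$-linked to $D$ if for every nonzero finitely generated ideal $F\subseteq D$ with $F^\star=D^\star$ one has $(FT)^{\star'}=T^{\star'}$. $T$ is $(\star,\star')$-flat over $D$ if $T$ is $(\star,\star')$-linked to $D$ and $D_{Q\cap D}=T_Q$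 for every quasi-$\star'_f$-prime ideal $Q$ of $T$. A multiplicative system of ideals of $D$ is a nonempty set $\Sigma$ of nonzero ideals closed under products; $\Sigma^{\tilde\star}=\{I^{\tilde\star}:I\in\Sigma\}$ and $D^{\tilde\star}_{\Sigma^{\tilde\star}}:=\{z\in K: zI^{\tilde\star}\subseteq D^{\tilde\star}$ for some $I\in\Sigma\}$. *)

theory Defs
  imports Main
begin

text \<open>Convention: the quotient field K of the domain D is the whole type 'k (a field).
  Subsets of 'k are D-submodules of K; D itself is a subring of 'k whose fraction field is 'k.\<close>

definition subring :: "'k::field set \<Rightarrow> bool" where
  "subring R \<longleftrightarrow> 0 \<in> R \<and> 1 \<in> R \<and> (\<forall>a\<in>R. \<forall>b\<in>R. a + b \<in> R \<and> a - b \<in> R \<and> a * b \<in> R)"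

definition domain_with_qf :: "'k::field set \<Rightarrow> bool" where
  "domain_with_qf D \<longleftrightarrow> subring D \<and> (\<forall>z. \<exists>a\<in>D. \<exists>b\<in>D. b \<noteq> 0 \<and> z = a / b)"

definition overring :: "'k::field set \<Rightarrow> 'k set \<Rightarrow> bool" where
  "overring D T \<longleftrightarrow> subring T \<and> D \<subseteq> T"

definition submod :: "'k::field set \<Rightarrow> 'k set \<Rightarrow> bool" where
  "submod D E \<longleftrightarrow> 0 \<in> E \<and> (\<forall>x\<in>E. \<forall>y\<in>E. x + y \<in> E) \<and> (\<forall>d\<in>D. \<forall>x\<in>E. d * x \<in> E)"

definition Fbar :: "'k::field set \<Rightarrow> 'k set set" where
  "Fbar D = {E. submod D E \<and> E \<noteq> {0}}"

definition gen_mod :: "'k::field set \<Rightarrow> 'k set \<Rightarrow> 'k set" where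
  "gen_mod D S = {\<Sum>i<n. a i * s i | (n::nat) a s. \<forall>i<n. a i \<in> D \<and> s i \<in> S}"

definition ffg :: "'k::field set \<Rightarrow> 'k set set" where
  "ffg D = {E \<in> Fbar D. \<exists>S. finite S \<and> E = gen_mod D S}"

definition smult :: "'k::field set \<Rightarrow> 'k set \<Rightarrow> 'k set" where
  "smult A B = {\<Sum>i<n. a i * b i | (n::nat) a b. \<forall>i<n. a i \<in> A \<and> b i \<in> B}"

definition semistar :: "'k::field set \<Rightarrow> ('k set \<Rightarrow> 'k set) \<Rightarrow> bool" where
  "semistar D st \<longleftrightarrow>
     (\<forall>E\<in>Fbar D. st E \<in> Fbar D) \<and>
     (\<forall>x E. x \<noteq> 0 \<longrightarrow> E \<in> Fbar D \<longrightarrow> st ((\<lambda>e. x * e) ` E) = (\<lambda>e. x * e) ` st E) \<and>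
     (\<forall>E\<in>Fbar D. \<forall>F\<in>Fbar D. E \<subseteq> F \<longrightarrow> st E \<subseteq> st F) \<and>
     (\<forall>E\<in>Fbar D. E \<subseteq> st E \<and> st (st E) = st E)"

definition star_f :: "'k::field set \<Rightarrow> ('k set \<Rightarrow> 'k set) \<Rightarrow> 'k set \<Rightarrow> 'k set" where
  "star_f D st E = \<Union>{st F | F. F \<in> ffg D \<and> F \<subseteq> E}"

definition ideal_of :: "'k::field set \<Rightarrow> 'k set \<Rightarrow> bool" where
  "ideal_of D I \<longleftrightarrow> I \<subseteq> D \<and> submod D I"

definition prime_ideal_of :: "'k::field set \<Rightarrow> 'k set \<Rightarrow> bool" where
  "prime_ideal_of D P \<longleftrightarrow> ideal_of D P \<and> P \<noteq> D \<and>
     (\<forall>a\<in>D. \<forall>b\<in>D. a * b \<in> P \<longrightarrow> a \<in> P \<or> b \<in> P)"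

definition quasi_ideal :: "'k::field set \<Rightarrow> ('k set \<Rightarrow> 'k set) \<Rightarrow> 'k set \<Rightarrow> bool" where
  "quasi_ideal D st I \<longleftrightarrow> ideal_of D I \<and> I \<noteq> {0} \<and> st I \<inter> D = I"

definition quasi_prime :: "'k::field set \<Rightarrow> ('k set \<Rightarrow> 'k set) \<Rightarrow> 'k set \<Rightarrow> bool" where
  "quasi_prime D st P \<longleftrightarrow> quasi_ideal D st P \<and> prime_ideal_of D P"

definition quasi_max :: "'k::field set \<Rightarrow> ('k set \<Rightarrow> 'k set) \<Rightarrow> 'k set \<Rightarrow> bool" where
  "quasi_max D st Q \<longleftrightarrow> quasi_ideal D st Q \<and> Q \<noteq> D \<and>
     (\<forall>J. quasi_ideal D st J \<and> J \<noteq> D \<and> Q \<subseteq> J \<longrightarrow> J = Q)"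

definition Mf :: "'k::field set \<Rightarrow> ('k set \<Rightarrow> 'k set) \<Rightarrow> 'k set set" where
  "Mf D st = {Q. quasi_max D (star_f D st) Q}"

text \<open>fractions R_S = {a/s : a \<in> R, s \<in> S}; D_P = loc D (D - P)\<close>
definition loc :: "'k::field set \<Rightarrow> 'k set \<Rightarrow> 'k set" where
  "loc R S = {a / s | a s. a \<in> R \<and> s \<in> S}"

text \<open>E^{st~} = \<Inter>{E D_Q : Q \<in> M(st_f)}; equals K = UNIV when M(st_f) is empty\<close>
definition tilde :: "'k::field set \<Rightarrow> ('k set \<Rightarrow> 'k set) \<Rightarrow> 'k set \<Rightarrow> 'k set" where
  "tilde D st E = \<Inter>{smult E (loc D (D - Q)) | Q. Q \<in> Mf D st}"

definition linked :: "'k::field set \<Rightarrow> 'k set \<Rightarrow> ('k set \<Rightarrow> 'k set) \<Rightarrow> ('k set \<Rightarrow> 'k set) \<Rightarrow> bool" where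
  "linked D T st st' \<longleftrightarrow>
     (\<forall>F. F \<in> ffg D \<and> F \<subseteq> D \<and> st F = st D \<longrightarrow> st' (smult F T) = st' T)"

definition star_flat :: "'k::field set \<Rightarrow> 'k set \<Rightarrow> ('k set \<Rightarrow> 'k set) \<Rightarrow> ('k set \<Rightarrow> 'k set) \<Rightarrow> bool" where
  "star_flat D T st st' \<longleftrightarrow> linked D T st st' \<and>
     (\<forall>Q. quasi_prime T (star_f T st') Q \<longrightarrow> loc D (D - (Q \<inter> D)) = loc T (T - Q))"

definition mult_system :: "'k::field set \<Rightarrow> 'k set set \<Rightarrow> bool" where
  "mult_system D \<Sigma> \<longleftrightarrow> \<Sigma> \<noteq> {} \<and> (\<forall>I\<in>\<Sigma>. ideal_of D I \<and> I \<noteq> {0}) \<and>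
     (\<forall>I\<in>\<Sigma>. \<forall>J\<in>\<Sigma>. smult I J \<in> \<Sigma>)"

text \<open>D^{st~}_{\<Sigma>^{st~}} = {z : z I^{st~} \<subseteq> D^{st~} for some I \<in> \<Sigma>}\<close>
definition gen_loc :: "'k::field set \<Rightarrow> ('k set \<Rightarrow> 'k set) \<Rightarrow> 'k set set \<Rightarrow> 'k set" where
  "gen_loc D st \<Sigma> = {z. \<exists>I\<in>\<Sigma>. (\<lambda>e. z * e) ` tilde D st I \<subseteq> tilde D st D}"

text \<open>Flatness of an A-submodule M of K over a subring A, via the equational criterion
  (every linear relation in M is a consequence of relations in A).\<close>
definition flat_over :: "'k::field set \<Rightarrow> 'k set \<Rightarrow> bool" where
  "flat_over A M \<longleftrightarrow>
     (\<forall>n (a::nat \<Rightarrow> 'k) m. (\<forall>i<n. a i \<in> A \<and> m i \<in> M) \<and> (\<Sum>i<n. a i * m i) = 0 \<longrightarrow>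
        (\<exists>k (b::nat \<Rightarrow> nat \<Rightarrow> 'k) y. (\<forall>j<k. y j \<in> M) \<and> (\<forall>i<n. \<forall>j<k. b i j \<in> A) \<and>
           (\<forall>i<n. m i = (\<Sum>j<k. b i j * y j)) \<and> (\<forall>j<k. (\<Sum>i<n. a i * b i j) = 0)))"

end

theory Submission imports Defs begin

lemma sr0: "subring R \<Longrightarrow> 0 \<in> R" by (simp add: subring_def)
lemma sr1: "subring R \<Longrightarrow> 1 \<in> R" by (simp add: subring_def)
lemma sr_add: "subring R \<Longrightarrow> a \<in> R \<Longrightarrow> b \<in> R \<Longrightarrow> a + b \<in> R" by (simp add: subring_def)
lemma sr_diff: "subring R \<Longrightarrow> a \<in> R \<Longrightarrow> b \<in> R \<Longrightarrow> a - b \<in> R" by (simp add: subring_def)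
lemma sr_mult: "subring R \<Longrightarrow> a \<in> R \<Longrightarrow> b \<in> R \<Longrightarrow> a * b \<in> R" by (simp add: subring_def)
lemma sr_uminus: "subring R \<Longrightarrow> a \<in> R \<Longrightarrow> - a \<in> R"
  using sr_diff[of R 0 a] sr0[of R] by simp

section \<open>Finite sums\<close>

definition sums_of :: "'a::comm_monoid_add set \<Rightarrow> 'a set" where
  "sums_of X = {\<Sum>i<n. f i | (n::nat) f. \<forall>i<n. f i \<in> X}"

lemma sums_ofI: "\<forall>i<(n::nat). f i \<in> X \<Longrightarrow> x = (\<Sum>i<n. f i) \<Longrightarrow> x \<in> sums_of X"
  unfolding sums_of_def by blast

lemma smultI: "\<forall>i<(n::nat). a i \<in> A \<and> b i \<in> B \<Longrightarrow> x = (\<Sum>i<n. a i * b i) \<Longrightarrow> x \<in> smult A B"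
  unfolding smult_def by blast

lemma sums_of_0: "0 \<in> sums_of X"
  unfolding sums_of_def by (rule CollectI, rule exI[of _ 0], auto)

lemma sums_of_incl: "x \<in> X \<Longrightarrow> x \<in> sums_of X"
  unfolding sums_of_def by (rule CollectI, rule exI[of _ 1], rule exI[of _ "\<lambda>_. x"]) auto

lemma sums_of_add_aux:
  "\<forall>x\<in>sums_of X. (\<forall>i<(m::nat). g i \<in> X) \<longrightarrow> x + (\<Sum>i<m. g i) \<in> sums_of X"
proof (induction m)
  case 0 then show ?case by simp
next
  case (Suc m)
  show ?case
  proof (intro ballI impI)
    fix x assume x: "x \<in> sums_of X" and g: "\<forall>i<Suc m. g i \<in> X"
    have "x + (\<Sum>i<m. g i) \<in> sums_of X" using Suc.IH x g by auto
    then obtain n :: nat and f where nf: "x + (\<Sum>i<m. g i) = (\<Sum>i<n. f i)" "\<forall>i<n. f i \<in> X"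
      unfolding sums_of_def by blast
    define h where "h = f(n := g m)"
    have "(\<Sum>i<Suc n. h i) = (\<Sum>i<n. f i) + g m"
      unfolding h_def by (simp add: sum.lessThan_Suc)
    moreover have "\<forall>i<Suc n. h i \<in> X" using nf g unfolding h_def by (auto simp: less_Suc_eq)
    ultimately have "(\<Sum>i<n. f i) + g m \<in> sums_of X" by (metis sums_ofI)
    then show "x + (\<Sum>i<Suc m. g i) \<in> sums_of X" using nf by (simp add: add.assoc[symmetric])
  qed
qed

lemma sums_of_add: "x \<in> sums_of X \<Longrightarrow> y \<in> sums_of X \<Longrightarrow> x + y \<in> sums_of X"
  using sums_of_add_aux[of X] unfolding sums_of_def[of X, symmetric]
  by (smt (verit, ccfv_threshold) mem_Collect_eq sums_of_def)

lemma submod_sum: "submod R E \<Longrightarrow> (\<forall>i<(n::nat). f i \<in> E) \<Longrightarrow> (\<Sum>i<n. f i) \<in> E"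
  by (induction n) (auto simp: submod_def)

lemma sums_of_least: "submod R E \<Longrightarrow> X \<subseteq> E \<Longrightarrow> sums_of X \<subseteq> E"
  unfolding sums_of_def using submod_sum[of R E] by blast

lemma sums_of_submod:
  assumes "\<forall>r\<in>R. \<forall>x\<in>X. r * x \<in> X"
  shows "submod R (sums_of X)"
  unfolding submod_def
proof (intro conjI ballI)
  show "0 \<in> sums_of X" by (rule sums_of_0)
  fix x y assume "x \<in> sums_of X" "y \<in> sums_of X"
  then show "x + y \<in> sums_of X" by (rule sums_of_add)
next
  fix d x assume d: "d \<in> R" and x: "x \<in> sums_of X"
  then obtain n :: nat and f where "x = (\<Sum>i<n. f i)" "\<forall>i<n. f i \<in> X" unfolding sums_of_def by blast
  then have "d * x = (\<Sum>i<n. d * f i)" "\<forall>i<n. d * f i \<in> X" using assms d by (auto simp: sum_distrib_left)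
  then show "d * x \<in> sums_of X" unfolding sums_of_def by blast
qed

lemma smult_eq: "smult A B = sums_of {a * b | a b. a \<in> A \<and> b \<in> B}"
proof
  show "smult A B \<subseteq> sums_of {a * b | a b. a \<in> A \<and> b \<in> B}"
    unfolding smult_def sums_of_def by fastforce
  show "sums_of {a * b | a b. a \<in> A \<and> b \<in> B} \<subseteq> smult A B"
  proof
    fix x assume "x \<in> sums_of {a * b | a b. a \<in> A \<and> b \<in> B}"
    then obtain n :: nat and f where x: "x = (\<Sum>i<n. f i)" and f: "\<forall>i<n. \<exists>a b. f i = a * b \<and> a \<in> A \<and> b \<in> B"
      unfolding sums_of_def by blast
    have "\<forall>i. \<exists>p. i < n \<longrightarrow> f i = fst p * snd p \<and> fst p \<in> A \<and> snd p \<in> B"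
      using f by fastforce
    then obtain p where p: "\<forall>i. i < n \<longrightarrow> f i = fst (p i) * snd (p i) \<and> fst (p i) \<in> A \<and> snd (p i) \<in> B"
      by metis
    have "x = (\<Sum>i<n. fst (p i) * snd (p i))" using x p by simp
    then show "x \<in> smult A B" using p by (intro smultI[of n "\<lambda>i. fst (p i)" _ "\<lambda>i. snd (p i)"]) auto
  qed
qed

lemma gen_mod_eq: "gen_mod R S = smult R S"
  unfolding gen_mod_def smult_def by simp

lemma prods_memI: "a \<in> A \<Longrightarrow> b \<in> B \<Longrightarrow> x = a * b \<Longrightarrow> x \<in> {a * b | a b. a \<in> A \<and> b \<in> B}"
  by blast

lemma smult_submod:
  assumes "\<forall>r\<in>R. \<forall>a\<in>A. r * a \<in> A"
  shows "submod R (smult A B)"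
  unfolding smult_eq
proof (rule sums_of_submod, intro ballI)
  fix r x assume r: "r \<in> R" and "x \<in> {a * b | a b. a \<in> A \<and> b \<in> B}"
  then obtain a b where "x = a * b" "a \<in> A" "b \<in> B" by blast
  then show "r * x \<in> {a * b | a b. a \<in> A \<and> b \<in> B}"
    using assms r by (intro prods_memI[of "r * a" _ b]) (auto simp: mult.assoc)
qed

lemma smult_submod2:
  assumes "\<forall>r\<in>R. \<forall>b\<in>B. r * b \<in> B"
  shows "submod R (smult A B)"
  unfolding smult_eq
proof (rule sums_of_submod, intro ballI)
  fix r x assume r: "r \<in> R" and "x \<in> {a * b | a b. a \<in> A \<and> b \<in> B}"
  then obtain a b where "x = a * b" "a \<in> A" "b \<in> B" by blast
  then show "r * x \<in> {a * b | a b. a \<in> A \<and> b \<in> B}"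
    using assms r by (intro prods_memI[of a _ "r * b"]) (auto simp: mult.left_commute)
qed

lemma smult_least: "submod R E \<Longrightarrow> (\<forall>a\<in>A. \<forall>b\<in>B. a * b \<in> E) \<Longrightarrow> smult A B \<subseteq> E"
  unfolding smult_eq by (rule sums_of_least) auto

lemma smult_incl: "a \<in> A \<Longrightarrow> b \<in> B \<Longrightarrow> a * b \<in> smult A B"
  unfolding smult_eq by (rule sums_of_incl) auto


section \<open>Generated modules\<close>

lemma gm_submod: "subring R \<Longrightarrow> submod R (gen_mod R S)"
  unfolding gen_mod_eq by (rule smult_submod) (auto intro: sr_mult)

lemma gm_incl: "subring R \<Longrightarrow> x \<in> S \<Longrightarrow> x \<in> gen_mod R S"
  unfolding gen_mod_eq using smult_incl[of 1 R x S] sr1 by auto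

lemma gm_least: "submod R E \<Longrightarrow> S \<subseteq> E \<Longrightarrow> gen_mod R S \<subseteq> E"
  unfolding gen_mod_eq by (rule smult_least) (auto simp: submod_def)

lemma gm_mono: "subring R \<Longrightarrow> S \<subseteq> S' \<Longrightarrow> gen_mod R S \<subseteq> gen_mod R S'"
  by (meson gm_incl gm_least gm_submod subset_iff)

lemma submod_image: "submod R E \<Longrightarrow> submod R ((*) b ` E)"
  unfolding submod_def
proof (intro conjI ballI)
  assume E: "0 \<in> E \<and> (\<forall>x\<in>E. \<forall>y\<in>E. x + y \<in> E) \<and> (\<forall>d\<in>R. \<forall>x\<in>E. d * x \<in> E)"
  show "0 \<in> (*) b ` E" using E by (metis image_eqI mult_zero_right)
  fix x y assume "x \<in> (*) b ` E" "y \<in> (*) b ` E"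
  then obtain x' y' where "x = b * x'" "y = b * y'" "x' \<in> E" "y' \<in> E" by blast
  then show "x + y \<in> (*) b ` E" using E by (metis distrib_left image_eqI)
next
  fix d x
  assume E: "0 \<in> E \<and> (\<forall>x\<in>E. \<forall>y\<in>E. x + y \<in> E) \<and> (\<forall>d\<in>R. \<forall>x\<in>E. d * x \<in> E)"
    and "d \<in> R" "x \<in> (*) b ` E"
  then obtain x' where "x = b * x'" "x' \<in> E" "d \<in> R" by blast
  then show "d * x \<in> (*) b ` E" using E by (metis image_eqI mult.left_commute)
qed

lemma gm_scale:
  assumes R: "subring R" and b: "b \<noteq> 0"
  shows "gen_mod R ((*) b ` S) = (*) b ` gen_mod R S"
proof
  show "gen_mod R ((*) b ` S) \<subseteq> (*) b ` gen_mod R S"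
    by (rule gm_least[OF submod_image[OF gm_submod[OF R]]]) (use gm_incl[OF R] in blast)
  have "gen_mod R S \<subseteq> (*) (inverse b) ` gen_mod R ((*) b ` S)"
  proof (rule gm_least[OF submod_image[OF gm_submod[OF R]]], rule subsetI)
    fix s assume "s \<in> S"
    then have "b * s \<in> gen_mod R ((*) b ` S)" using gm_incl[OF R] by blast
    moreover have "s = inverse b * (b * s)" using b by simp
    ultimately show "s \<in> (*) (inverse b) ` gen_mod R ((*) b ` S)" by blast
  qed
  show "(*) b ` gen_mod R S \<subseteq> gen_mod R ((*) b ` S)"
  proof
    fix y assume "y \<in> (*) b ` gen_mod R S"
    then obtain x where x: "y = b * x" "x \<in> gen_mod R S" by blast
    then obtain w where w: "x = inverse b * w" "w \<in> gen_mod R ((*) b ` S)"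
      using \<open>gen_mod R S \<subseteq> _\<close> by blast
    have "y = w" using x(1) w(1) b by simp
    then show "y \<in> gen_mod R ((*) b ` S)" using w(2) by simp
  qed
qed

lemma submod_0: "submod R E \<Longrightarrow> 0 \<in> E" by (simp add: submod_def)
lemma submod_add: "submod R E \<Longrightarrow> x \<in> E \<Longrightarrow> y \<in> E \<Longrightarrow> x + y \<in> E" by (simp add: submod_def)
lemma submod_scal: "submod R E \<Longrightarrow> d \<in> R \<Longrightarrow> x \<in> E \<Longrightarrow> d * x \<in> E" by (simp add: submod_def)

lemma submod_nonzero: "submod R E \<Longrightarrow> E \<noteq> {0} \<Longrightarrow> \<exists>x\<in>E. x \<noteq> 0"
  using submod_0 by blast

lemma Fbar_submod: "E \<in> Fbar R \<Longrightarrow> submod R E" by (simp add: Fbar_def)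
lemma Fbar_nz: "E \<in> Fbar R \<Longrightarrow> E \<noteq> {0}" by (simp add: Fbar_def)
lemma FbarI: "submod R E \<Longrightarrow> E \<noteq> {0} \<Longrightarrow> E \<in> Fbar R" by (simp add: Fbar_def)

lemma ffgI: "subring R \<Longrightarrow> finite S \<Longrightarrow> gen_mod R S \<noteq> {0} \<Longrightarrow> gen_mod R S \<in> ffg R"
  by (auto simp: ffg_def Fbar_def gm_submod)

lemma ffg_Fbar: "F \<in> ffg R \<Longrightarrow> F \<in> Fbar R" by (simp add: ffg_def)

lemma ffgE: "F \<in> ffg R \<Longrightarrow> \<exists>S. finite S \<and> F = gen_mod R S" by (simp add: ffg_def)

lemma gm_single: "subring R \<Longrightarrow> x \<noteq> 0 \<Longrightarrow> gen_mod R {x} \<in> ffg R"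
  by (rule ffgI) (auto dest: gm_incl[of R x "{x}"])

lemma R_Fbar: "subring R \<Longrightarrow> R \<in> Fbar R"
  by (rule FbarI) (auto simp: submod_def subring_def)

section \<open>Semistar basics\<close>

lemma st_Fbar: "semistar R st \<Longrightarrow> F \<in> Fbar R \<Longrightarrow> st F \<in> Fbar R"
  by (simp add: semistar_def)
lemma st_ext: "semistar R st \<Longrightarrow> F \<in> Fbar R \<Longrightarrow> F \<subseteq> st F"
  by (simp add: semistar_def)
lemma st_idem: "semistar R st \<Longrightarrow> F \<in> Fbar R \<Longrightarrow> st (st F) = st F"
  by (simp add: semistar_def)
lemma st_mono: "semistar R st \<Longrightarrow> E \<in> Fbar R \<Longrightarrow> F \<in> Fbar R \<Longrightarrow> E \<subseteq> F \<Longrightarrow> st E \<subseteq> st F"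
  by (simp add: semistar_def)
lemma st_scale: "semistar R st \<Longrightarrow> x \<noteq> 0 \<Longrightarrow> E \<in> Fbar R \<Longrightarrow> st ((*) x ` E) = (*) x ` st E"
  unfolding semistar_def by auto
lemma st_submod: "semistar R st \<Longrightarrow> F \<in> Fbar R \<Longrightarrow> submod R (st F)"
  using st_Fbar Fbar_submod by blast

lemma sf_mono: "E \<subseteq> E' \<Longrightarrow> star_f R st E \<subseteq> star_f R st E'"
  unfolding star_f_def by blast
lemma sf_ge: "F \<in> ffg R \<Longrightarrow> F \<subseteq> E \<Longrightarrow> st F \<subseteq> star_f R st E"
  unfolding star_f_def by blast
lemma sf_memE: "x \<in> star_f R st E \<Longrightarrow> \<exists>F\<in>ffg R. F \<subseteq> E \<and> x \<in> st F"
  unfolding star_f_def by blast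

lemma sf_ext:
  assumes R: "subring R" and st: "semistar R st" and E: "E \<in> Fbar R"
  shows "E \<subseteq> star_f R st E"
proof
  fix x assume x: "x \<in> E"
  obtain e where e: "e \<in> E" "e \<noteq> 0" using submod_nonzero[OF Fbar_submod[OF E] Fbar_nz[OF E]] by blast
  show "x \<in> star_f R st E"
  proof (cases "x = 0")
    case True
    have F: "gen_mod R {e} \<in> ffg R" using gm_single[OF R e(2)] .
    have "gen_mod R {e} \<subseteq> E" using gm_least[OF Fbar_submod[OF E]] e by blast
    moreover have "0 \<in> st (gen_mod R {e})" using st_submod[OF st ffg_Fbar[OF F]] submod_0 by blast
    ultimately show ?thesis using sf_ge[OF F] True by blast
  next
    case False
    have F: "gen_mod R {x} \<in> ffg R" using gm_single[OF R False] .
    have "gen_mod R {x} \<subseteq> E" using gm_least[OF Fbar_submod[OF E]] x by blast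
    moreover have "x \<in> st (gen_mod R {x})" using st_ext[OF st ffg_Fbar[OF F]] gm_incl[OF R] by blast
    ultimately show ?thesis using sf_ge[OF F] by blast
  qed
qed

lemma sf_dir:
  assumes R: "subring R" and st: "semistar R st" and E: "E \<in> Fbar R"
    and S: "finite S" "S \<subseteq> star_f R st E"
  shows "\<exists>G\<in>ffg R. G \<subseteq> E \<and> S \<subseteq> st G"
  using S
proof (induction S rule: finite_induct)
  case empty
  obtain e where e: "e \<in> E" "e \<noteq> 0" using submod_nonzero[OF Fbar_submod[OF E] Fbar_nz[OF E]] by blast
  have "gen_mod R {e} \<subseteq> E" using gm_least[OF Fbar_submod[OF E]] e by blast
  then show ?case using gm_single[OF R e(2)] by blast
next
  case (insert x S)
  have xs: "S \<subseteq> star_f R st E" "x \<in> star_f R st E" using insert.prems by auto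
  obtain G1 where G1: "G1 \<in> ffg R" "G1 \<subseteq> E" "S \<subseteq> st G1" using insert.IH[OF xs(1)] by blast
  obtain F2 where F2: "F2 \<in> ffg R" "F2 \<subseteq> E" "x \<in> st F2" using sf_memE[OF xs(2)] by blast
  obtain S1 where S1: "finite S1" "G1 = gen_mod R S1" using ffgE[OF G1(1)] by blast
  obtain S2 where S2: "finite S2" "F2 = gen_mod R S2" using ffgE[OF F2(1)] by blast
  define G where "G = gen_mod R (S1 \<union> S2)"
  have sub1: "G1 \<subseteq> G" "F2 \<subseteq> G" unfolding G_def S1 S2 using gm_mono[OF R, of S1 "S1 \<union> S2"] gm_mono[OF R, of S2 "S1 \<union> S2"] by auto
  have "S1 \<subseteq> G1" "S2 \<subseteq> F2" unfolding S1(2) S2(2) using gm_incl[OF R] by auto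
  then have "S1 \<union> S2 \<subseteq> E" using G1(2) F2(2) by auto
  then have GE: "G \<subseteq> E" unfolding G_def by (rule gm_least[OF Fbar_submod[OF E]])
  have "G1 \<noteq> {0}" using Fbar_nz[OF ffg_Fbar[OF G1(1)]] .
  then obtain g where "g \<in> G1" "g \<noteq> 0" using submod_0[OF Fbar_submod[OF ffg_Fbar[OF G1(1)]]] by blast
  then have "G \<noteq> {0}" using sub1(1) by blast
  then have Gf: "G \<in> ffg R" unfolding G_def using S1 S2 by (intro ffgI[OF R]) auto
  have "st G1 \<subseteq> st G" "st F2 \<subseteq> st G"
    using sub1 st_mono[OF st ffg_Fbar[OF G1(1)] ffg_Fbar[OF Gf]] st_mono[OF st ffg_Fbar[OF F2(1)] ffg_Fbar[OF Gf]]
    by auto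
  then show ?case using Gf GE G1(3) F2(3) by blast
qed

lemma sf_submod:
  assumes R: "subring R" and st: "semistar R st" and E: "E \<in> Fbar R"
  shows "submod R (star_f R st E)"
  unfolding submod_def
proof (intro conjI ballI)
  show "0 \<in> star_f R st E" using sf_ext[OF R st E] submod_0[OF Fbar_submod[OF E]] by blast
  fix x y assume "x \<in> star_f R st E" "y \<in> star_f R st E"
  then obtain G where "G \<in> ffg R" "G \<subseteq> E" "{x, y} \<subseteq> st G"
    using sf_dir[OF R st E, of "{x,y}"] by auto
  then have "x + y \<in> st G" using submod_add[OF st_submod[OF st ffg_Fbar[OF \<open>G \<in> ffg R\<close>]]] by auto
  then show "x + y \<in> star_f R st E" using sf_ge[of G R E st] \<open>G \<in> ffg R\<close> \<open>G \<subseteq> E\<close> by blast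
next
  fix d x assume "d \<in> R" "x \<in> star_f R st E"
  then obtain G where "G \<in> ffg R" "G \<subseteq> E" "x \<in> st G" using sf_memE by blast
  then have "d * x \<in> st G" using submod_scal[OF st_submod[OF st ffg_Fbar[OF \<open>G \<in> ffg R\<close>]]] \<open>d \<in> R\<close> by auto
  then show "d * x \<in> star_f R st E" using sf_ge[of G R E st] \<open>G \<in> ffg R\<close> \<open>G \<subseteq> E\<close> by blast
qed

lemma sf_Fbar:
  assumes R: "subring R" and st: "semistar R st" and E: "E \<in> Fbar R"
  shows "star_f R st E \<in> Fbar R"
  using sf_submod[OF R st E] sf_ext[OF R st E] Fbar_nz[OF E] submod_0[OF Fbar_submod[OF E]]
  by (intro FbarI) auto

lemma sf_idem:
  assumes R: "subring R" and st: "semistar R st" and E: "E \<in> Fbar R"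
  shows "star_f R st (star_f R st E) \<subseteq> star_f R st E"
proof
  fix x assume "x \<in> star_f R st (star_f R st E)"
  then obtain F where F: "F \<in> ffg R" "F \<subseteq> star_f R st E" "x \<in> st F" using sf_memE by blast
  obtain S where S: "finite S" "F = gen_mod R S" using ffgE[OF F(1)] by blast
  have "S \<subseteq> star_f R st E" using F(2) S(2) gm_incl[OF R] by blast
  then obtain G where G: "G \<in> ffg R" "G \<subseteq> E" "S \<subseteq> st G" using sf_dir[OF R st E S(1)] by blast
  have "F \<subseteq> st G" unfolding S(2) by (rule gm_least[OF st_submod[OF st ffg_Fbar[OF G(1)]] G(3)])
  then have "st F \<subseteq> st (st G)"
    using st_mono[OF st ffg_Fbar[OF F(1)] st_Fbar[OF st ffg_Fbar[OF G(1)]]] by blast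
  also have "\<dots> = st G" using st_idem[OF st ffg_Fbar[OF G(1)]] .
  finally show "x \<in> star_f R st E" using F(3) sf_ge[OF G(1) G(2)] by blast
qed

lemma st_unit:
  assumes R: "subring R" and st: "semistar R st" and F: "F \<in> Fbar R" "F \<subseteq> R" and one: "1 \<in> st F"
  shows "st F = st R"
proof
  show "st F \<subseteq> st R" using st_mono[OF st F(1) R_Fbar[OF R] F(2)] .
  have "R \<subseteq> st F"
    using submod_scal[OF st_submod[OF st F(1)] _ one] by (metis mult.right_neutral subsetI)
  then have "st R \<subseteq> st (st F)" using st_mono[OF st R_Fbar[OF R] st_Fbar[OF st F(1)]] by blast
  then show "st R \<subseteq> st F" using st_idem[OF st F(1)] by simp
qed

lemma sf_unit:
  assumes R: "subring R" and st: "semistar R st" and J: "J \<subseteq> R"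
  shows "star_f R st J = st R \<longleftrightarrow> 1 \<in> star_f R st J"
proof
  assume "star_f R st J = st R"
  then show "1 \<in> star_f R st J" using st_ext[OF st R_Fbar[OF R]] sr1[OF R] by blast
next
  assume "1 \<in> star_f R st J"
  then obtain F where F: "F \<in> ffg R" "F \<subseteq> J" "1 \<in> st F" using sf_memE by blast
  have eq: "st F = st R" using st_unit[OF R st ffg_Fbar[OF F(1)]] F J by blast
  show "star_f R st J = st R"
  proof
    show "star_f R st J \<subseteq> st R"
    proof
      fix y assume "y \<in> star_f R st J"
      then obtain G where G: "G \<in> ffg R" "G \<subseteq> J" "y \<in> st G" using sf_memE by blast
      have "st G \<subseteq> st R" using st_mono[OF st ffg_Fbar[OF G(1)] R_Fbar[OF R]] G(2) J by blast
      then show "y \<in> st R" using G(3) by blast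
    qed
    show "st R \<subseteq> star_f R st J" using eq sf_ge[of F R J st] F by simp
  qed
qed


section \<open>Ideals and quasi-ideals\<close>

lemma ideal_sub: "ideal_of R I \<Longrightarrow> I \<subseteq> R" by (simp add: ideal_of_def)
lemma ideal_submod: "ideal_of R I \<Longrightarrow> submod R I" by (simp add: ideal_of_def)
lemma ideal_Fbar: "ideal_of R I \<Longrightarrow> I \<noteq> {0} \<Longrightarrow> I \<in> Fbar R"
  by (simp add: ideal_of_def Fbar_def)
lemma ideal_one: assumes "ideal_of R I" "1 \<in> I" shows "I = R"
proof
  show "I \<subseteq> R" using ideal_sub[OF assms(1)] .
  show "R \<subseteq> I"
  proof
    fix r assume "r \<in> R"
    then have "r * 1 \<in> I" using submod_scal[OF ideal_submod[OF assms(1)]] assms(2) by blast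
    then show "r \<in> I" by simp
  qed
qed

lemma submod_Int: "submod R A \<Longrightarrow> submod R B \<Longrightarrow> submod R (A \<inter> B)"
  by (simp add: submod_def)

lemma quasi_block:
  assumes "subring R" "quasi_ideal R (star_f R st) Q" "Q \<noteq> R" "J \<subseteq> Q"
  shows "1 \<notin> star_f R st J"
proof
  assume "1 \<in> star_f R st J"
  then have "1 \<in> star_f R st Q" using sf_mono[OF assms(4)] by blast
  then have "1 \<in> Q" using assms(2) sr1[OF assms(1)] unfolding quasi_ideal_def by blast
  then show False using ideal_one assms(2,3) unfolding quasi_ideal_def by blast
qed

lemma QI:
  assumes R: "subring R" and st: "semistar R st" and J: "ideal_of R J" "J \<noteq> {0}"
    and one: "1 \<notin> star_f R st J"
  shows "quasi_ideal R (star_f R st) (star_f R st J \<inter> R)" "star_f R st J \<inter> R \<noteq> R"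
    "J \<subseteq> star_f R st J \<inter> R" "1 \<notin> star_f R st (star_f R st J \<inter> R)"
proof -
  have JF: "J \<in> Fbar R" using ideal_Fbar J by blast
  have sub: "J \<subseteq> star_f R st J \<inter> R" using sf_ext[OF R st JF] ideal_sub[OF J(1)] by blast
  then show "J \<subseteq> star_f R st J \<inter> R" .
  have idem: "star_f R st (star_f R st J \<inter> R) \<subseteq> star_f R st J"
    using sf_mono[of "star_f R st J \<inter> R" "star_f R st J" R st] sf_idem[OF R st JF] by blast
  then show "1 \<notin> star_f R st (star_f R st J \<inter> R)" using one by blast
  show "star_f R st J \<inter> R \<noteq> R" using one sr1[OF R] by blast
  have "submod R (star_f R st J \<inter> R)"
    using submod_Int[OF sf_submod[OF R st JF] Fbar_submod[OF R_Fbar[OF R]]] .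
  then have id: "ideal_of R (star_f R st J \<inter> R)" unfolding ideal_of_def by blast
  have nz: "star_f R st J \<inter> R \<noteq> {0}" using J(2) sub submod_0[OF ideal_submod[OF J(1)]] by blast
  have "star_f R st J \<inter> R \<subseteq> star_f R st (star_f R st J \<inter> R) \<inter> R"
    using sf_ext[OF R st ideal_Fbar[OF id nz]] by blast
  moreover have "star_f R st (star_f R st J \<inter> R) \<inter> R \<subseteq> star_f R st J \<inter> R" using idem by blast
  ultimately show "quasi_ideal R (star_f R st) (star_f R st J \<inter> R)"
    unfolding quasi_ideal_def using id nz by blast
qed

lemma Mf_quasi: "Q \<in> Mf R st \<Longrightarrow> quasi_ideal R (star_f R st) Q \<and> Q \<noteq> R"
  by (simp add: Mf_def quasi_max_def)

lemma Mf_ideal: "Q \<in> Mf R st \<Longrightarrow> ideal_of R Q"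
  by (simp add: Mf_def quasi_max_def quasi_ideal_def)

lemma Mf_nz: "Q \<in> Mf R st \<Longrightarrow> Q \<noteq> {0}"
  by (simp add: Mf_def quasi_max_def quasi_ideal_def)

lemma Mf_max:
  assumes R: "subring R" and st: "semistar R st" and Q: "Q \<in> Mf R st"
    and I: "ideal_of R I" "Q \<subseteq> I" "1 \<notin> star_f R st I"
  shows "I \<subseteq> Q"
proof -
  have "0 \<in> Q" using submod_0[OF ideal_submod[OF Mf_ideal[OF Q]]] .
  then have Inz: "I \<noteq> {0}" using Mf_nz[OF Q] I(2) by blast
  note qi = QI[OF R st I(1) Inz I(3)]
  have "quasi_max R (star_f R st) Q" using Q by (simp add: Mf_def)
  then have "\<forall>J. quasi_ideal R (star_f R st) J \<and> J \<noteq> R \<and> Q \<subseteq> J \<longrightarrow> J = Q"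
    by (simp add: quasi_max_def)
  then have "star_f R st I \<inter> R = Q" using qi(1,2,3) I(2) by blast
  then show ?thesis using qi(3) by blast
qed

lemma exists_Mf:
  assumes R: "subring R" and st: "semistar R st" and J: "ideal_of R J" "J \<noteq> {0}"
    and one: "1 \<notin> star_f R st J"
  shows "\<exists>Q\<in>Mf R st. J \<subseteq> Q"
proof -
  define A where "A = {I. ideal_of R I \<and> J \<subseteq> I \<and> 1 \<notin> star_f R st I}"
  have "\<forall>C\<in>chains A. \<exists>U\<in>A. \<forall>X\<in>C. X \<subseteq> U"
  proof
    fix C assume C: "C \<in> chains A"
    show "\<exists>U\<in>A. \<forall>X\<in>C. X \<subseteq> U"
    proof (cases "C = {}")
      case True
      then show ?thesis using J one unfolding A_def by blast
    next
      case False
      have CA: "C \<subseteq> A" and ch: "chain\<^sub>\<subseteq> C" using C unfolding chains_def by auto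
      have ch2: "\<forall>X\<in>C. \<forall>Y\<in>C. X \<subseteq> Y \<or> Y \<subseteq> X" using ch unfolding chain_subset_def .
      have idC: "\<And>X. X \<in> C \<Longrightarrow> ideal_of R X" using CA unfolding A_def by blast
      have "ideal_of R (\<Union>C)"
        unfolding ideal_of_def submod_def
      proof (intro conjI ballI)
        show "\<Union>C \<subseteq> R" using idC ideal_sub by blast
        show "0 \<in> \<Union>C" using False idC ideal_submod submod_0 by blast
        fix x y assume "x \<in> \<Union>C" "y \<in> \<Union>C"
        then obtain X Y where "X \<in> C" "Y \<in> C" "x \<in> X" "y \<in> Y" by blast
        then show "x + y \<in> \<Union>C" using ch2 idC ideal_submod submod_add
          by (metis UnionI subsetD)
      next
        fix d x assume "d \<in> R" "x \<in> \<Union>C"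
        then obtain X where "X \<in> C" "x \<in> X" by blast
        then show "d * x \<in> \<Union>C" using idC ideal_submod submod_scal \<open>d \<in> R\<close> by (metis UnionI)
      qed
      moreover have "J \<subseteq> \<Union>C" using False CA unfolding A_def by blast
      moreover have "1 \<notin> star_f R st (\<Union>C)"
      proof
        assume "1 \<in> star_f R st (\<Union>C)"
        then obtain F where F: "F \<in> ffg R" "F \<subseteq> \<Union>C" "1 \<in> st F" using sf_memE by blast
        obtain S where S: "finite S" "F = gen_mod R S" using ffgE[OF F(1)] by blast
        have "S \<subseteq> \<Union>C" using F(2) S(2) gm_incl[OF R] by blast
        moreover have "subset.chain UNIV C" using ch chain_subset_alt_def by blast
        ultimately obtain X where X: "X \<in> C" "S \<subseteq> X"
          using finite_subset_Union_chain[OF S(1) _ False] by blast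
        have "F \<subseteq> X" unfolding S(2) by (rule gm_least[OF ideal_submod[OF idC[OF X(1)]] X(2)])
        then have "1 \<in> star_f R st X" using sf_ge[of F R X st] F by blast
        then show False using X(1) CA unfolding A_def by blast
      qed
      ultimately show ?thesis unfolding A_def by blast
    qed
  qed
  then obtain M where M: "M \<in> A" "\<forall>X\<in>A. M \<subseteq> X \<longrightarrow> X = M" using Zorn_Lemma2[of A] by blast
  have Mi: "ideal_of R M" "J \<subseteq> M" "1 \<notin> star_f R st M" using M(1) unfolding A_def by auto
  have Mnz: "M \<noteq> {0}" using Mi(2) J(2) submod_0[OF ideal_submod[OF J(1)]] by blast
  note qi = QI[OF R st Mi(1) Mnz Mi(3)]
  have "star_f R st M \<inter> R \<in> A" using qi Mi(2) unfolding A_def quasi_ideal_def by blast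
  then have eq: "star_f R st M \<inter> R = M" using M(2) qi(3) by blast
  have "quasi_max R (star_f R st) M"
    unfolding quasi_max_def
  proof (intro conjI allI impI)
    show "quasi_ideal R (star_f R st) M" using qi(1) eq by simp
    show "M \<noteq> R" using qi(2) eq by simp
    fix J' assume J': "quasi_ideal R (star_f R st) J' \<and> J' \<noteq> R \<and> M \<subseteq> J'"
    then have "1 \<notin> star_f R st J'" using quasi_block[OF R, of st J' J'] by blast
    then have "J' \<in> A" using J' Mi(2) unfolding A_def quasi_ideal_def by blast
    then show "J' = M" using M(2) J' by blast
  qed
  then show ?thesis using Mi(2) unfolding Mf_def by blast
qed

lemma Mf_prime:
  assumes R: "subring R" and st: "semistar R st" and Q: "Q \<in> Mf R st"
  shows "prime_ideal_of R Q"
  unfolding prime_ideal_of_def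
proof (intro conjI ballI impI)
  have Qi: "ideal_of R Q" using Mf_ideal[OF Q] .
  show "ideal_of R Q" using Qi .
  show "Q \<noteq> R" using Mf_quasi[OF Q] by blast
  fix a b assume ab: "a \<in> R" "b \<in> R" "a * b \<in> Q"
  show "a \<in> Q \<or> b \<in> Q"
  proof (rule ccontr)
    assume nab: "\<not> (a \<in> Q \<or> b \<in> Q)"
    define J where "J = {q + a * r | q r. q \<in> Q \<and> r \<in> R}"
    have QR: "Q \<subseteq> R" using ideal_sub[OF Qi] .
    have QJ: "Q \<subseteq> J" unfolding J_def using sr0[OF R] by force
    have aJ: "a \<in> J" unfolding J_def using sr1[OF R] submod_0[OF ideal_submod[OF Qi]]
      by (metis (mono_tags, lifting) CollectI add_0 mult.right_neutral)
    have Jid: "ideal_of R J" unfolding ideal_of_def submod_def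
    proof (intro conjI ballI)
      show "J \<subseteq> R" unfolding J_def using QR ab(1) R by (auto intro!: sr_add sr_mult)
      show "0 \<in> J" using QJ submod_0[OF ideal_submod[OF Qi]] by blast
      fix x y assume "x \<in> J" "y \<in> J"
      then obtain q1 r1 q2 r2 where "x = q1 + a * r1" "y = q2 + a * r2" "q1 \<in> Q" "q2 \<in> Q" "r1 \<in> R" "r2 \<in> R"
        unfolding J_def by blast
      moreover have "x + y = (q1 + q2) + a * (r1 + r2)" using calculation by (simp add: algebra_simps)
      ultimately show "x + y \<in> J" unfolding J_def
        using submod_add[OF ideal_submod[OF Qi]] sr_add[OF R] by blast
    next
      fix d x assume "d \<in> R" "x \<in> J"
      then obtain q r where "x = q + a * r" "q \<in> Q" "r \<in> R" unfolding J_def by blast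
      moreover have "d * x = d * q + a * (d * r)" using calculation by (simp add: algebra_simps)
      ultimately show "d * x \<in> J" unfolding J_def
        using submod_scal[OF ideal_submod[OF Qi]] sr_mult[OF R] \<open>d \<in> R\<close> by blast
    qed
    have "1 \<in> star_f R st J"
    proof (rule ccontr)
      assume "1 \<notin> star_f R st J"
      then have "J \<subseteq> Q" using Mf_max[OF R st Q Jid QJ] by blast
      then show False using aJ nab by blast
    qed
    then obtain F where F: "F \<in> ffg R" "F \<subseteq> J" "1 \<in> st F" using sf_memE by blast
    obtain S where S: "finite S" "F = gen_mod R S" using ffgE[OF F(1)] by blast
    have b0: "b \<noteq> 0" using nab submod_0[OF ideal_submod[OF Qi]] by blast
    have bF: "(*) b ` F = gen_mod R ((*) b ` S)" using gm_scale[OF R b0] S(2) by simp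
    obtain f where f: "f \<in> F" "f \<noteq> 0" using submod_nonzero[OF Fbar_submod Fbar_nz] ffg_Fbar[OF F(1)] by blast
    have "b * f \<in> (*) b ` F" "b * f \<noteq> 0" using f b0 by auto
    then have "(*) b ` F \<noteq> {0}" by blast
    then have bFf: "(*) b ` F \<in> ffg R" unfolding bF using S(1) by (intro ffgI[OF R]) auto
    have "(*) b ` F \<subseteq> Q"
    proof
      fix y assume "y \<in> (*) b ` F"
      then obtain x where "y = b * x" "x \<in> J" using F(2) by blast
      then obtain q r where "y = b * (q + a * r)" "q \<in> Q" "r \<in> R" unfolding J_def by blast
      moreover have "b * (q + a * r) = b * q + r * (a * b)" by (simp add: algebra_simps)
      ultimately show "y \<in> Q"
        using submod_add[OF ideal_submod[OF Qi]] submod_scal[OF ideal_submod[OF Qi]] ab by metis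
    qed
    moreover have "b \<in> st ((*) b ` F)" using st_scale[OF st b0 ffg_Fbar[OF F(1)]] F(3) by force
    ultimately have "b \<in> star_f R st Q" using sf_ge[of "(*) b ` F" R Q st] bFf by blast
    then have "b \<in> Q" using Mf_quasi[OF Q] ab(2) unfolding quasi_ideal_def by blast
    then show False using nab by blast
  qed
qed


section \<open>Localizations\<close>

lemma locI: "a \<in> R \<Longrightarrow> s \<in> S \<Longrightarrow> x = a / s \<Longrightarrow> x \<in> loc R S"
  unfolding loc_def by blast

lemma locE: "x \<in> loc R S \<Longrightarrow> \<exists>a s. a \<in> R \<and> s \<in> S \<and> x = a / s"
  unfolding loc_def by blast

lemma loc_mono: "S \<subseteq> S' \<Longrightarrow> loc R S \<subseteq> loc R S'"
  unfolding loc_def by blast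

lemma loc_incl: "1 \<in> S \<Longrightarrow> R \<subseteq> loc R S"
  by (auto intro: locI[of _ R 1 S])

definition mclosed :: "'k::field set \<Rightarrow> 'k set \<Rightarrow> bool" where
  "mclosed R S \<longleftrightarrow> S \<subseteq> R \<and> 1 \<in> S \<and> 0 \<notin> S \<and> (\<forall>s\<in>S. \<forall>t\<in>S. s * t \<in> S)"

lemma loc_subring:
  assumes R: "subring R" and S: "mclosed R S"
  shows "subring (loc R S)"
  unfolding subring_def
proof (intro conjI ballI)
  have S1: "1 \<in> S" and S0: "0 \<notin> S" and Sm: "\<And>s t. s \<in> S \<Longrightarrow> t \<in> S \<Longrightarrow> s * t \<in> S"
    and SR: "S \<subseteq> R" using S unfolding mclosed_def by auto
  show "0 \<in> loc R S" using locI[of 0 R 1 S 0] sr0[OF R] S1 by simp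
  show "1 \<in> loc R S" using locI[of 1 R 1 S 1] sr1[OF R] S1 by simp
  fix x y assume "x \<in> loc R S" "y \<in> loc R S"
  then obtain a s b t where ab: "a \<in> R" "s \<in> S" "x = a / s" "b \<in> R" "t \<in> S" "y = b / t"
    using locE by metis
  have nz: "s \<noteq> 0" "t \<noteq> 0" using ab S0 by auto
  have sR: "s \<in> R" "t \<in> R" using ab SR by auto
  have "x + y = (a * t + b * s) / (s * t)" using ab nz by (simp add: field_simps)
  then show "x + y \<in> loc R S"
    using ab sR Sm[of s t] by (intro locI[of "a * t + b * s" R "s * t" S]) (auto intro!: sr_add[OF R] sr_mult[OF R])
  have "x - y = (a * t - b * s) / (s * t)" using ab nz by (simp add: field_simps)
  then show "x - y \<in> loc R S"
    using ab sR Sm[of s t] by (intro locI[of "a * t - b * s" R "s * t" S]) (auto intro!: sr_diff[OF R] sr_mult[OF R])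
  have "x * y = (a * b) / (s * t)" using ab nz by (simp add: field_simps)
  then show "x * y \<in> loc R S"
    using ab sR Sm[of s t] by (intro locI[of "a * b" R "s * t" S]) (auto intro!: sr_mult[OF R])
qed

lemma prime_mclosed:
  assumes R: "subring R" and P: "prime_ideal_of R P"
  shows "mclosed R (R - P)"
proof -
  have Pi: "ideal_of R P" and PR: "P \<noteq> R" using P unfolding prime_ideal_of_def by auto
  have "1 \<notin> P" using ideal_one[OF Pi] PR by blast
  moreover have "0 \<in> P" using submod_0[OF ideal_submod[OF Pi]] .
  moreover have "\<forall>s\<in>R - P. \<forall>t\<in>R - P. s * t \<in> R - P"
    using P sr_mult[OF R] unfolding prime_ideal_of_def by blast
  ultimately show ?thesis unfolding mclosed_def using sr1[OF R] by blast
qed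

lemma loc_prime_subring: "subring R \<Longrightarrow> prime_ideal_of R P \<Longrightarrow> subring (loc R (R - P))"
  using loc_subring prime_mclosed by blast

lemma subring_submod: "subring L \<Longrightarrow> submod L L"
  using R_Fbar Fbar_submod by blast

lemma smult_sub_ring: "subring L \<Longrightarrow> A \<subseteq> L \<Longrightarrow> B \<subseteq> L \<Longrightarrow> smult A B \<subseteq> L"
  by (rule smult_least[OF subring_submod]) (auto intro: sr_mult)

lemma smult_scale_into:
  assumes "\<forall>a\<in>A. z * a \<in> B" "w \<in> smult A C"
  shows "z * w \<in> smult B C"
proof -
  obtain n :: nat and a c where w: "w = (\<Sum>i<n. a i * c i)" "\<forall>i<n. a i \<in> A \<and> c i \<in> C"
    using assms(2) unfolding smult_def by blast
  have "z * w = (\<Sum>i<n. (z * a i) * c i)" unfolding w(1) by (simp add: sum_distrib_left mult.assoc)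
  then show ?thesis using w(2) assms(1) by (intro smultI[of n "\<lambda>i. z * a i" B c C]) auto
qed

lemma submod_empty: "0 \<in> X \<Longrightarrow> (\<forall>x\<in>X. \<forall>y\<in>X. x + y \<in> X) \<Longrightarrow> submod {} X"
  by (simp add: submod_def)


lemma submod_mono_ring: "D \<subseteq> T \<Longrightarrow> submod T E \<Longrightarrow> submod D E"
  unfolding submod_def by blast

lemma smult_gm:
  assumes D: "subring D" and T: "subring T" and DT: "D \<subseteq> T"
  shows "smult (gen_mod D S) T = gen_mod T S"
proof
  have "gen_mod D S \<subseteq> gen_mod T S"
    by (rule gm_least[OF submod_mono_ring[OF DT gm_submod[OF T]]]) (use gm_incl[OF T] in blast)
  then show "smult (gen_mod D S) T \<subseteq> gen_mod T S"
    using submod_scal[OF gm_submod[OF T]]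
    by (intro smult_least[OF gm_submod[OF T]]) (metis mult.commute subsetD)
  have "S \<subseteq> smult (gen_mod D S) T"
    using smult_incl[of _ "gen_mod D S" 1 T] gm_incl[OF D] sr1[OF T] by fastforce
  moreover have sm: "submod T (smult (gen_mod D S) T)" using smult_submod2[of T T] sr_mult[OF T] by blast
  ultimately show "gen_mod T S \<subseteq> smult (gen_mod D S) T" using gm_least[OF sm] by blast
qed

locale setting =
  fixes D T :: "'k::field set" and st st' :: "'k set \<Rightarrow> 'k set"
  assumes qf: "domain_with_qf D" and ov: "overring D T"
    and st: "semistar D st" and st': "semistar T st'"
begin

lemma D: "subring D" using qf unfolding domain_with_qf_def by blast
lemma T: "subring T" using ov unfolding overring_def by blast
lemma DT: "D \<subseteq> T" using ov unfolding overring_def by blast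

lemma frac: "\<exists>a\<in>D. \<exists>b\<in>D. b \<noteq> 0 \<and> z = a / b"
  using qf unfolding domain_with_qf_def by blast

lemma contr_nz:
  assumes Q: "ideal_of T Q" "Q \<noteq> {0}"
  shows "Q \<inter> D \<noteq> {0}"
proof -
  obtain q where q: "q \<in> Q" "q \<noteq> 0" using submod_nonzero[OF ideal_submod[OF Q(1)] Q(2)] by blast
  obtain a b where ab: "a \<in> D" "b \<in> D" "b \<noteq> 0" "q = a / b" using frac by blast
  have "b * q \<in> Q" using submod_scal[OF ideal_submod[OF Q(1)]] ab(2) DT q(1) by blast
  moreover have "b * q = a" using ab by simp
  moreover have "a \<noteq> 0" using ab q by auto
  ultimately show ?thesis using ab(1) by blast
qed

lemma contr_ideal: "ideal_of T Q \<Longrightarrow> ideal_of D (Q \<inter> D)"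
  unfolding ideal_of_def using submod_Int[OF submod_mono_ring[OF DT] subring_submod[OF D]] by blast

lemma contr_prime:
  assumes "prime_ideal_of T Q" shows "prime_ideal_of D (Q \<inter> D)"
proof -
  have Qi: "ideal_of T Q" and QT: "Q \<noteq> T" using assms unfolding prime_ideal_of_def by auto
  have "1 \<notin> Q" using ideal_one[OF Qi] QT by blast
  then have "Q \<inter> D \<noteq> D" using sr1[OF D] by blast
  moreover have "\<forall>a\<in>D. \<forall>b\<in>D. a * b \<in> Q \<inter> D \<longrightarrow> a \<in> Q \<inter> D \<or> b \<in> Q \<inter> D"
    using assms DT unfolding prime_ideal_of_def by blast
  ultimately show ?thesis unfolding prime_ideal_of_def using contr_ideal[OF Qi] by blast
qed

lemma smult_ideal:
  assumes "A \<subseteq> T" shows "ideal_of T (smult A T)"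
  unfolding ideal_of_def
  using smult_sub_ring[OF T assms] smult_submod2[of T T A] sr_mult[OF T] by blast

lemma smult_incl1: "A \<subseteq> smult A T"
  using smult_incl[of _ A 1 T] sr1[OF T] by fastforce

lemma smult_in_ideal:
  assumes "ideal_of T J" "A \<subseteq> J" shows "smult A T \<subseteq> J"
  using assms submod_scal[OF ideal_submod[OF assms(1)]]
  by (intro smult_least[OF ideal_submod[OF assms(1)]]) (metis mult.commute subsetD)

lemma smult_nz: "A \<subseteq> T \<Longrightarrow> a \<in> A \<Longrightarrow> a \<noteq> 0 \<Longrightarrow> smult A T \<noteq> {0}"
  using smult_incl1 by blast

abbreviation "sfD \<equiv> star_f D st"
abbreviation "sfT \<equiv> star_f T st'"

lemma Mf_T_qp: "Q \<in> Mf T st' \<Longrightarrow> quasi_prime T sfT Q"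
  unfolding quasi_prime_def using Mf_quasi Mf_prime[OF T st'] by blast

lemma qp_block: "quasi_prime T sfT Q \<Longrightarrow> J \<subseteq> Q \<Longrightarrow> 1 \<notin> sfT J"
  unfolding quasi_prime_def prime_ideal_of_def using quasi_block[OF T] by blast

lemma qp_ideal: "quasi_prime T sfT Q \<Longrightarrow> ideal_of T Q"
  unfolding quasi_prime_def quasi_ideal_def by blast
lemma qp_nz: "quasi_prime T sfT Q \<Longrightarrow> Q \<noteq> {0}"
  unfolding quasi_prime_def quasi_ideal_def by blast
lemma qp_prime: "quasi_prime T sfT Q \<Longrightarrow> prime_ideal_of T Q"
  unfolding quasi_prime_def by blast

lemma linked_contr:
  assumes L: "linked D T st st'" and Q: "ideal_of T Q" "Q \<noteq> {0}" "1 \<notin> sfT Q"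
  shows "\<exists>M\<in>Mf D st. Q \<inter> D \<subseteq> M"
proof -
  have "1 \<notin> sfD (Q \<inter> D)"
  proof
    assume "1 \<in> sfD (Q \<inter> D)"
    then obtain F where F: "F \<in> ffg D" "F \<subseteq> Q \<inter> D" "1 \<in> st F" using sf_memE by blast
    have eq: "st F = st D" using st_unit[OF D st ffg_Fbar[OF F(1)]] F by blast
    then have eq': "st' (smult F T) = st' T" using L F unfolding linked_def by blast
    obtain S where S: "finite S" "F = gen_mod D S" using ffgE[OF F(1)] by blast
    have FT: "smult F T = gen_mod T S" using smult_gm[OF D T DT] S(2) by simp
    obtain f where f: "f \<in> F" "f \<noteq> 0"
      using submod_nonzero[OF Fbar_submod Fbar_nz] ffg_Fbar[OF F(1)] by blast
    have "f \<in> smult F T" using smult_incl1 f by blast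
    then have "smult F T \<noteq> {0}" using f by blast
    then have FTf: "smult F T \<in> ffg T" unfolding FT using S(1) by (intro ffgI[OF T]) (auto simp: FT)
    have "smult F T \<subseteq> Q" using smult_in_ideal[OF Q(1)] F(2) by blast
    moreover have "1 \<in> st' (smult F T)" using eq' st_ext[OF st' R_Fbar[OF T]] sr1[OF T] by blast
    ultimately have "1 \<in> sfT Q" using sf_ge[of "smult F T" T Q st'] FTf by blast
    then show False using Q(3) by blast
  qed
  moreover have "ideal_of D (Q \<inter> D)" using contr_ideal[OF Q(1)] .
  moreover have "Q \<inter> D \<noteq> {0}" using contr_nz[OF Q(1,2)] .
  ultimately show ?thesis using exists_Mf[OF D st] by blast
qed

lemma loc_eq:
  assumes Q: "prime_ideal_of T Q" and TL: "T \<subseteq> loc D (D - (Q \<inter> D))"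
  shows "loc D (D - (Q \<inter> D)) = loc T (T - Q)"
proof
  show "loc D (D - (Q \<inter> D)) \<subseteq> loc T (T - Q)" unfolding loc_def using DT by blast
  show "loc T (T - Q) \<subseteq> loc D (D - (Q \<inter> D))"
  proof
    fix x assume "x \<in> loc T (T - Q)"
    then obtain t u where tu: "t \<in> T" "u \<in> T" "u \<notin> Q" "x = t / u" using locE by blast
    obtain a s where as: "a \<in> D" "s \<in> D" "s \<notin> Q" "t = a / s" using locE[of t] TL tu(1) by blast
    obtain b r where br: "b \<in> D" "r \<in> D" "r \<notin> Q" "u = b / r" using locE[of u] TL tu(2) by blast
    have Qi: "ideal_of T Q" using Q unfolding prime_ideal_of_def by blast
    have z: "0 \<in> Q" using submod_0[OF ideal_submod[OF Qi]] .
    have nz: "s \<noteq> 0" "r \<noteq> 0" "u \<noteq> 0" using as br tu z by auto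
    have b: "b = u * r" using br nz by simp
    have "b \<notin> Q" unfolding b using Q tu br DT unfolding prime_ideal_of_def by blast
    then have "s * b \<notin> Q" using Q as br DT unfolding prime_ideal_of_def by blast
    moreover have "b \<noteq> 0" using \<open>b \<notin> Q\<close> z by auto
    then have "x = (a * r) / (s * b)" unfolding tu(4) as(4) br(4) using nz(1,2) by (simp add: field_simps)
    moreover have "s * b \<in> D" "a * r \<in> D" using as br sr_mult[OF D] by auto
    ultimately have "s * b \<in> D - (Q \<inter> D)" "a * r \<in> D" "x = (a * r) / (s * b)" by auto
    then show "x \<in> loc D (D - (Q \<inter> D))" using locI by metis
  qed
qed

end


context setting begin

lemma Mf_T_one: "Q \<in> Mf T st' \<Longrightarrow> 1 \<notin> Q"
  using Mf_quasi ideal_one Mf_ideal by blast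

lemma locQ_T: "Q \<in> Mf T st' \<Longrightarrow> T \<subseteq> loc T (T - Q)"
  using loc_incl[of "T - Q" T] Mf_T_one sr1[OF T] by blast

lemma T_tilde: "T \<subseteq> tilde T st' T"
proof
  fix t assume t: "t \<in> T"
  have "t \<in> smult T (loc T (T - Q))" if "Q \<in> Mf T st'" for Q
    using smult_incl[of t T 1 "loc T (T - Q)"] t locQ_T[OF that] sr1[OF T] by auto
  then show "t \<in> tilde T st' T" unfolding tilde_def by blast
qed

lemma H:
  assumes TL: "\<forall>Q\<in>Mf T st'. T \<subseteq> loc D (D - (Q \<inter> D))"
  shows "\<forall>P. prime_ideal_of D P \<and> P \<noteq> {0} \<longrightarrow> sfT (smult P T) = st' T \<or> T \<subseteq> loc D (D - P)"
proof (intro allI impI)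
  fix P assume P: "prime_ideal_of D P \<and> P \<noteq> {0}"
  have PD: "P \<subseteq> D" using P unfolding prime_ideal_of_def ideal_of_def by blast
  then have PT: "P \<subseteq> T" using DT by blast
  show "sfT (smult P T) = st' T \<or> T \<subseteq> loc D (D - P)"
  proof (cases "1 \<in> sfT (smult P T)")
    case True
    then show ?thesis using sf_unit[OF T st'] smult_sub_ring[OF T PT subset_refl] by blast
  next
    case False
    obtain p where p: "p \<in> P" "p \<noteq> 0"
      using P submod_0[OF ideal_submod] unfolding prime_ideal_of_def by blast
    have "smult P T \<noteq> {0}" using smult_nz[OF PT p] .
    then obtain Q where Q: "Q \<in> Mf T st'" "smult P T \<subseteq> Q"
      using exists_Mf[OF T st' smult_ideal[OF PT]] False by blast
    have "P \<subseteq> Q \<inter> D" using Q(2) smult_incl1[of P] PD by blast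
    then have "loc D (D - (Q \<inter> D)) \<subseteq> loc D (D - P)" by (intro loc_mono) blast
    then show ?thesis using TL Q(1) by blast
  qed
qed

lemma c1_T:
  assumes "star_flat D T st st'"
  shows "\<forall>Q\<in>Mf T st'. T \<subseteq> loc D (D - (Q \<inter> D))"
proof
  fix Q assume Q: "Q \<in> Mf T st'"
  have "loc D (D - (Q \<inter> D)) = loc T (T - Q)"
    using assms Mf_T_qp[OF Q] unfolding star_flat_def by blast
  then show "T \<subseteq> loc D (D - (Q \<inter> D))" using locQ_T[OF Q] by simp
qed

lemma c2_c1:
  assumes L: "linked D T st st'"
    and H: "\<forall>P. prime_ideal_of D P \<and> P \<noteq> {0} \<longrightarrow> sfT (smult P T) = st' T \<or> T \<subseteq> loc D (D - P)"
  shows "star_flat D T st st'"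
  unfolding star_flat_def
proof (intro conjI allI impI)
  show "linked D T st st'" using L .
  fix Q assume Q: "quasi_prime T sfT Q"
  have Pp: "prime_ideal_of D (Q \<inter> D)" using contr_prime[OF qp_prime[OF Q]] .
  have Pnz: "Q \<inter> D \<noteq> {0}" using contr_nz[OF qp_ideal[OF Q] qp_nz[OF Q]] .
  have PT: "Q \<inter> D \<subseteq> T" using DT by blast
  have "smult (Q \<inter> D) T \<subseteq> Q" using smult_in_ideal[OF qp_ideal[OF Q]] by blast
  then have "1 \<notin> sfT (smult (Q \<inter> D) T)" using qp_block[OF Q] by blast
  then have "sfT (smult (Q \<inter> D) T) \<noteq> st' T"
    using sf_unit[OF T st'] smult_sub_ring[OF T PT subset_refl] by blast
  then have "T \<subseteq> loc D (D - (Q \<inter> D))" using H Pp Pnz by blast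
  then show "loc D (D - (Q \<inter> D)) = loc T (T - Q)" using loc_eq[OF qp_prime[OF Q]] by blast
qed

lemma colon_ideal:
  "ideal_of D {d \<in> D. d * x \<in> D}"
  unfolding ideal_of_def submod_def
proof (intro conjI ballI)
  show "{d \<in> D. d * x \<in> D} \<subseteq> D" by blast
  show "0 \<in> {d \<in> D. d * x \<in> D}" using sr0[OF D] by simp
  fix a b assume a: "a \<in> {d \<in> D. d * x \<in> D}" and b: "b \<in> {d \<in> D. d * x \<in> D}"
  have "(a + b) * x = a * x + b * x" by (rule distrib_right)
  moreover have "a * x + b * x \<in> D" using a b sr_add[OF D] by blast
  moreover have "a + b \<in> D" using a b sr_add[OF D] by blast
  ultimately show "a + b \<in> {d \<in> D. d * x \<in> D}" by simp
next
  fix a b assume a: "a \<in> D" and b: "b \<in> {d \<in> D. d * x \<in> D}"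
  have "a * b * x = a * (b * x)" by (rule mult.assoc)
  moreover have "a * (b * x) \<in> D" using a b sr_mult[OF D] by blast
  moreover have "a * b \<in> D" using a b sr_mult[OF D] by blast
  ultimately show "a * b \<in> {d \<in> D. d * x \<in> D}" by (simp add: mult.assoc)
qed

lemma colon_nz: "\<exists>b. b \<in> {d \<in> D. d * x \<in> D} \<and> b \<noteq> 0"
proof -
  obtain a b where ab: "a \<in> D" "b \<in> D" "b \<noteq> 0" "x = a / b" using frac by blast
  then have "b * x = a" by simp
  then have "b \<in> {d \<in> D. d * x \<in> D}" using ab(1,2) by simp
  then show ?thesis using ab(3) by blast
qed

lemma colon_T: "{d \<in> D. d * x \<in> D} \<subseteq> T" using DT by blast

lemma colon_good:
  assumes TL: "\<forall>Q\<in>Mf T st'. x \<in> loc D (D - (Q \<inter> D))"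
  shows "1 \<in> sfT (smult {d \<in> D. d * x \<in> D} T)"
proof (rule ccontr)
  define I where "I = {d \<in> D. d * x \<in> D}"
  assume nz1: "1 \<notin> sfT (smult {d \<in> D. d * x \<in> D} T)"
  then have nz1': "1 \<notin> sfT (smult I T)" unfolding I_def .
  obtain b where b: "b \<in> I" "b \<noteq> 0" using colon_nz unfolding I_def by blast
  have IT: "I \<subseteq> T" unfolding I_def using colon_T .
  have "smult I T \<noteq> {0}" using smult_nz[OF IT b] .
  then obtain Q where Q: "Q \<in> Mf T st'" "smult I T \<subseteq> Q"
    using exists_Mf[OF T st' smult_ideal[OF IT] _ nz1'] by blast
  have "x \<in> loc D (D - (Q \<inter> D))" using TL Q(1) by blast
  then obtain a s where as: "a \<in> D" "s \<in> D - (Q \<inter> D)" "x = a / s" using locE by blast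
  have "0 \<in> Q" using submod_0[OF ideal_submod[OF Mf_ideal[OF Q(1)]]] .
  then have s0: "s \<noteq> 0" using as(2) by blast
  have "s * x = a" unfolding as(3) using s0 by simp
  then have "s \<in> I" unfolding I_def using as by simp
  then have "s \<in> Q" using Q(2) smult_incl1[of I] by blast
  then show False using as by blast
qed

lemma c1_c3:
  assumes TL: "\<forall>Q\<in>Mf T st'. T \<subseteq> loc D (D - (Q \<inter> D))"
  shows "\<forall>x\<in>T. x \<noteq> 0 \<longrightarrow> sfT (smult {d \<in> D. d * x \<in> D} T) = st' T"
proof (intro ballI impI)
  fix x assume "x \<in> T" "x \<noteq> 0"
  then have "1 \<in> sfT (smult {d \<in> D. d * x \<in> D} T)" using colon_good TL by blast
  then show "sfT (smult {d \<in> D. d * x \<in> D} T) = st' T"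
    using sf_unit[OF T st'] smult_sub_ring[OF T colon_T subset_refl] by blast
qed

lemma c3_c1:
  assumes L: "linked D T st st'"
    and C: "\<forall>x\<in>T. x \<noteq> 0 \<longrightarrow> sfT (smult {d \<in> D. d * x \<in> D} T) = st' T"
  shows "star_flat D T st st'"
  unfolding star_flat_def
proof (intro conjI allI impI)
  show "linked D T st st'" using L .
  fix Q assume Q: "quasi_prime T sfT Q"
  have "T \<subseteq> loc D (D - (Q \<inter> D))"
  proof
    fix t assume t: "t \<in> T"
    show "t \<in> loc D (D - (Q \<inter> D))"
    proof (cases "t = 0")
      case True
      have "0 \<notin> Q \<Longrightarrow> False" using submod_0[OF ideal_submod[OF qp_ideal[OF Q]]] by blast
      have "1 \<notin> Q" using ideal_one[OF qp_ideal[OF Q]] qp_prime[OF Q] unfolding prime_ideal_of_def by blast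
      then show ?thesis using True sr0[OF D] sr1[OF D] by (intro locI[of 0 D 1]) auto
    next
      case False
      have "1 \<in> sfT (smult {d \<in> D. d * t \<in> D} T)"
        using C t False sf_unit[OF T st'] smult_sub_ring[OF T colon_T subset_refl] by blast
      then have "\<not> {d \<in> D. d * t \<in> D} \<subseteq> Q"
        using qp_block[OF Q] smult_in_ideal[OF qp_ideal[OF Q]] by blast
      then obtain s where s: "s \<in> D" "s * t \<in> D" "s \<notin> Q" by blast
      have "s \<noteq> 0" using s submod_0[OF ideal_submod[OF qp_ideal[OF Q]]] by auto
      then have "t = (s * t) / s" by simp
      then show ?thesis using s by (intro locI[of "s * t" D s]) auto
    qed
  qed
  then show "loc D (D - (Q \<inter> D)) = loc T (T - Q)" using loc_eq[OF qp_prime[OF Q]] by blast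
qed

lemma smult_T_loc:
  assumes Q: "Q \<in> Mf T st'"
  shows "smult T (loc T (T - Q)) = loc T (T - Q)"
proof
  have sr: "subring (loc T (T - Q))" using loc_prime_subring[OF T Mf_prime[OF T st' Q]] .
  show "smult T (loc T (T - Q)) \<subseteq> loc T (T - Q)"
    using smult_sub_ring[OF sr locQ_T[OF Q] subset_refl] .
  show "loc T (T - Q) \<subseteq> smult T (loc T (T - Q))"
    using smult_incl[of 1 T _ "loc T (T - Q)"] sr1[OF T] by fastforce
qed

lemma c1_c4:
  assumes C: "star_flat D T st st'"
  shows "tilde T st' T = \<Inter>{loc D (D - (Q \<inter> D)) | Q. Q \<in> Mf T st'}"
proof -
  have eq: "smult T (loc T (T - Q)) = loc D (D - (Q \<inter> D))" if "Q \<in> Mf T st'" for Q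
  proof -
    have "loc D (D - (Q \<inter> D)) = loc T (T - Q)"
      using C Mf_T_qp[OF that] unfolding star_flat_def by blast
    then show ?thesis using smult_T_loc[OF that] by simp
  qed
  have "{smult T (loc T (T - Q)) | Q. Q \<in> Mf T st'} = {loc D (D - (Q \<inter> D)) | Q. Q \<in> Mf T st'}"
  proof (rule Collect_cong)
    fix x
    show "(\<exists>Q. x = smult T (loc T (T - Q)) \<and> Q \<in> Mf T st') = (\<exists>Q. x = loc D (D - (Q \<inter> D)) \<and> Q \<in> Mf T st')"
      using eq by auto
  qed
  then show ?thesis unfolding tilde_def by simp
qed

lemma c4_T:
  assumes "tilde T st' T = \<Inter>{loc D (D - (Q \<inter> D)) | Q. Q \<in> Mf T st'}"
  shows "\<forall>Q\<in>Mf T st'. T \<subseteq> loc D (D - (Q \<inter> D))"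
  using T_tilde assms by blast

end


context setting begin

lemma Mf_D_one: "M \<in> Mf D st \<Longrightarrow> 1 \<in> D - M"
  using Mf_quasi ideal_one Mf_ideal sr1[OF D] by blast

lemma tilde_incl: "i \<in> I \<Longrightarrow> i \<in> tilde D st I"
proof -
  assume i: "i \<in> I"
  have "i \<in> smult I (loc D (D - M))" if "M \<in> Mf D st" for M
  proof -
    have "1 \<in> loc D (D - M)" using loc_incl[of "D - M" D] Mf_D_one[OF that] sr1[OF D] by blast
    then show ?thesis using smult_incl[of i I 1 "loc D (D - M)"] i by simp
  qed
  then show "i \<in> tilde D st I" unfolding tilde_def by blast
qed

lemma tilde_D_sub: 
  assumes M: "M \<in> Mf D st" shows "tilde D st D \<subseteq> loc D (D - M)"
proof -
  have sr: "subring (loc D (D - M))" using loc_prime_subring[OF D Mf_prime[OF D st M]] .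
  have "smult D (loc D (D - M)) \<subseteq> loc D (D - M)"
    using smult_sub_ring[OF sr loc_incl[OF Mf_D_one[OF M]] subset_refl] .
  moreover have "tilde D st D \<subseteq> smult D (loc D (D - M))" unfolding tilde_def using M by blast
  ultimately show ?thesis by blast
qed

lemma G:
  assumes L: "linked D T st st'"
    and S: "\<forall>I\<in>\<Sigma>. ideal_of D I \<and> 1 \<in> sfT (smult I T)"
    and z: "z \<in> gen_loc D st \<Sigma>" and Q: "Q \<in> Mf T st'"
  shows "z \<in> loc D (D - (Q \<inter> D))"
proof -
  obtain I where I: "I \<in> \<Sigma>" "(\<lambda>e. z * e) ` tilde D st I \<subseteq> tilde D st D"
    using z unfolding gen_loc_def by blast
  have Ii: "ideal_of D I" and I1: "1 \<in> sfT (smult I T)" using S I(1) by auto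
  have qp: "quasi_prime T sfT Q" using Mf_T_qp[OF Q] .
  have IT: "I \<subseteq> T" using ideal_sub[OF Ii] DT by blast
  have "\<not> I \<subseteq> Q"
  proof
    assume "I \<subseteq> Q"
    then have "smult I T \<subseteq> Q" using smult_in_ideal[OF qp_ideal[OF qp]] by blast
    then show False using qp_block[OF qp] I1 by blast
  qed
  then obtain i where i: "i \<in> I" "i \<notin> Q" by blast
  have "z * i \<in> tilde D st D" using I(2) tilde_incl[OF i(1)] by blast
  moreover have "1 \<notin> sfT Q" using qp_block[OF qp] by blast
  then obtain M where M: "M \<in> Mf D st" "Q \<inter> D \<subseteq> M"
    using linked_contr[OF L qp_ideal[OF qp] qp_nz[OF qp]] by blast
  ultimately have "z * i \<in> loc D (D - M)" using tilde_D_sub by blast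
  then obtain a s where as: "a \<in> D" "s \<in> D - M" "z * i = a / s" using locE by blast
  have Qp: "prime_ideal_of T Q" using qp_prime[OF qp] .
  have iD: "i \<in> D" using i(1) ideal_sub[OF Ii] by blast
  have sQ: "s \<notin> Q" using as(2) M(2) by blast
  have "s * i \<notin> Q" using Qp sQ i(2) as(2) iD DT unfolding prime_ideal_of_def by blast
  moreover have "s * i \<in> D" using as(2) iD sr_mult[OF D] by blast
  moreover have "0 \<in> Q" using submod_0[OF ideal_submod[OF qp_ideal[OF qp]]] .
  then have nz: "s \<noteq> 0" "i \<noteq> 0" using sQ i(2) by auto
  then have "z = a / (s * i)" using as(3) by (simp add: field_simps)
  ultimately show ?thesis using as(1) by (intro locI[of a D "s * i"]) auto
qed

lemma c5_T:
  assumes L: "linked D T st st'"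
    and S: "mult_system D \<Sigma>" "tilde T st' T = gen_loc D st \<Sigma>" "\<forall>I\<in>\<Sigma>. sfT (smult I T) = st' T"
  shows "\<forall>Q\<in>Mf T st'. T \<subseteq> loc D (D - (Q \<inter> D))"
proof -
  have "\<forall>I\<in>\<Sigma>. ideal_of D I \<and> 1 \<in> sfT (smult I T)"
  proof
    fix I assume I: "I \<in> \<Sigma>"
    then have Ii: "ideal_of D I" using S(1) unfolding mult_system_def by blast
    then have "I \<subseteq> T" using ideal_sub DT by blast
    then have "smult I T \<subseteq> T" using smult_sub_ring[OF T _ subset_refl] by blast
    then show "ideal_of D I \<and> 1 \<in> sfT (smult I T)" using sf_unit[OF T st'] S(3) I Ii by blast
  qed
  then show ?thesis using G[OF L] T_tilde S(2) by blast
qed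

lemma c1_c5:
  assumes C: "star_flat D T st st'"
  shows "\<exists>\<Sigma>. mult_system D \<Sigma> \<and> tilde T st' T = gen_loc D st \<Sigma> \<and>
          (\<forall>I\<in>\<Sigma>. sfT (smult I T) = st' T)"
proof -
  have L: "linked D T st st'" using C unfolding star_flat_def by blast
  have C4: "tilde T st' T = \<Inter>{loc D (D - (Q \<inter> D)) | Q. Q \<in> Mf T st'}" using c1_c4[OF C] .
  define \<Sigma> where "\<Sigma> = {I. ideal_of D I \<and> I \<noteq> {0} \<and> 1 \<in> sfT (smult I T)}"
  have Sg: "\<forall>I\<in>\<Sigma>. ideal_of D I \<and> 1 \<in> sfT (smult I T)" unfolding \<Sigma>_def by blast
  have ITsub: "smult I T \<subseteq> T" if "ideal_of D I" for I
    using smult_sub_ring[OF T _ subset_refl] ideal_sub[OF that] DT by blast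
  have ms: "mult_system D \<Sigma>"
    unfolding mult_system_def
  proof (intro conjI ballI)
    have Did: "ideal_of D D" unfolding ideal_of_def using subring_submod[OF D] by blast
    have "1 \<in> smult D T" using smult_incl[of 1 D 1 T] sr1[OF D] sr1[OF T] by simp
    moreover have "smult D T \<in> Fbar T"
      using ideal_Fbar[OF smult_ideal[OF DT]] calculation by fastforce
    ultimately have "1 \<in> sfT (smult D T)" using sf_ext[OF T st'] by blast
    moreover have "D \<noteq> {0}" using sr1[OF D] by fastforce
    ultimately have "D \<in> \<Sigma>" unfolding \<Sigma>_def using Did by blast
    then show "\<Sigma> \<noteq> {}" by blast
  next
    fix I assume "I \<in> \<Sigma>" then show "ideal_of D I" unfolding \<Sigma>_def by blast
  next
    fix I assume "I \<in> \<Sigma>" then show "I \<noteq> {0}" unfolding \<Sigma>_def by blast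
  next
    fix I J assume I: "I \<in> \<Sigma>" and J: "J \<in> \<Sigma>"
    have Ii: "ideal_of D I" "I \<noteq> {0}" "1 \<in> sfT (smult I T)" using I unfolding \<Sigma>_def by auto
    have Ji: "ideal_of D J" "J \<noteq> {0}" "1 \<in> sfT (smult J T)" using J unfolding \<Sigma>_def by auto
    have IJD: "smult I J \<subseteq> D" using smult_sub_ring[OF D ideal_sub[OF Ii(1)] ideal_sub[OF Ji(1)]] .
    have "submod D (smult I J)"
      using smult_submod[of D I J] submod_scal[OF ideal_submod[OF Ii(1)]] by blast
    then have IJi: "ideal_of D (smult I J)" using IJD unfolding ideal_of_def by blast
    obtain i where i: "i \<in> I" "i \<noteq> 0" using submod_nonzero[OF ideal_submod[OF Ii(1)] Ii(2)] by blast
    obtain j where j: "j \<in> J" "j \<noteq> 0" using submod_nonzero[OF ideal_submod[OF Ji(1)] Ji(2)] by blast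
    have ij: "i * j \<in> smult I J" "i * j \<noteq> 0" using smult_incl[OF i(1) j(1)] i j by auto
    have "1 \<in> sfT (smult (smult I J) T)"
    proof (rule ccontr)
      assume n1: "1 \<notin> sfT (smult (smult I J) T)"
      have IJT: "smult I J \<subseteq> T" using IJD DT by blast
      have "smult (smult I J) T \<noteq> {0}" using smult_nz[OF IJT ij] .
      then obtain Q where Q: "Q \<in> Mf T st'" "smult (smult I J) T \<subseteq> Q"
        using exists_Mf[OF T st' smult_ideal[OF IJT] _ n1] by blast
      have qp: "quasi_prime T sfT Q" using Mf_T_qp[OF Q(1)] .
      have IJQ: "smult I J \<subseteq> Q" using Q(2) smult_incl1[of "smult I J"] by blast
      have "I \<subseteq> Q \<or> J \<subseteq> Q"
      proof (rule ccontr)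
        assume "\<not> (I \<subseteq> Q \<or> J \<subseteq> Q)"
        then obtain a b where ab: "a \<in> I" "a \<notin> Q" "b \<in> J" "b \<notin> Q" by blast
        have "a * b \<in> Q" using IJQ smult_incl[OF ab(1) ab(3)] by blast
        moreover have "a \<in> T" "b \<in> T" using ab ideal_sub[OF Ii(1)] ideal_sub[OF Ji(1)] DT by auto
        ultimately show False using qp_prime[OF qp] ab unfolding prime_ideal_of_def by blast
      qed
      then show False
      proof
        assume "I \<subseteq> Q"
        then have "smult I T \<subseteq> Q" using smult_in_ideal[OF qp_ideal[OF qp]] by blast
        then show False using qp_block[OF qp] Ii(3) by blast
      next
        assume "J \<subseteq> Q"
        then have "smult J T \<subseteq> Q" using smult_in_ideal[OF qp_ideal[OF qp]] by blast
        then show False using qp_block[OF qp] Ji(3) by blast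
      qed
    qed
    then show "smult I J \<in> \<Sigma>" unfolding \<Sigma>_def using IJi ij by blast
  qed
  have eqS: "tilde T st' T = gen_loc D st \<Sigma>"
  proof
    show "gen_loc D st \<Sigma> \<subseteq> tilde T st' T"
      unfolding C4 using G[OF L Sg] by blast
    show "tilde T st' T \<subseteq> gen_loc D st \<Sigma>"
    proof
      fix z assume "z \<in> tilde T st' T"
      then have zl: "\<forall>Q\<in>Mf T st'. z \<in> loc D (D - (Q \<inter> D))" unfolding C4 by blast
      define I where "I = {d \<in> D. d * z \<in> D}"
      have Ii: "ideal_of D I" unfolding I_def by (rule colon_ideal)
      have "I \<noteq> {0}" using colon_nz[of z] unfolding I_def by blast
      moreover have "1 \<in> sfT (smult I T)" using colon_good[OF zl] unfolding I_def .
      ultimately have IS: "I \<in> \<Sigma>" unfolding \<Sigma>_def using Ii by blast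
      have "(\<lambda>e. z * e) ` tilde D st I \<subseteq> tilde D st D"
      proof
        fix y assume "y \<in> (\<lambda>e. z * e) ` tilde D st I"
        then obtain w where w: "y = z * w" "w \<in> tilde D st I" by blast
        have "z * w \<in> smult D (loc D (D - M))" if "M \<in> Mf D st" for M
        proof -
          have "w \<in> smult I (loc D (D - M))" using w(2) that unfolding tilde_def by blast
          moreover have "\<forall>a\<in>I. z * a \<in> D" unfolding I_def by (simp add: mult.commute)
          ultimately show ?thesis using smult_scale_into by blast
        qed
        then show "y \<in> tilde D st D" unfolding tilde_def w(1) by blast
      qed
      then show "z \<in> gen_loc D st \<Sigma>" unfolding gen_loc_def using IS by blast
    qed
  qed
  have "\<forall>I\<in>\<Sigma>. sfT (smult I T) = st' T"
    using Sg sf_unit[OF T st'] ITsub by blast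
  then show ?thesis using ms eqS by blast
qed

end


context setting begin

lemma c6_c1:
  assumes L: "linked D T st st'"
    and F: "\<forall>P. quasi_prime D sfD P \<longrightarrow> flat_over (loc D (D - P)) (loc T (D - P))"
  shows "star_flat D T st st'"
  unfolding star_flat_def
proof (intro conjI allI impI)
  show "linked D T st st'" using L .
  fix Q assume Q: "quasi_prime T sfT Q"
  have Qi: "ideal_of T Q" using qp_ideal[OF Q] .
  have Qp: "prime_ideal_of T Q" using qp_prime[OF Q] .
  have Q0: "0 \<in> Q" using submod_0[OF ideal_submod[OF Qi]] .
  have "1 \<notin> sfT Q" using qp_block[OF Q] by blast
  then obtain M where M: "M \<in> Mf D st" "Q \<inter> D \<subseteq> M"
    using linked_contr[OF L Qi qp_nz[OF Q]] by blast
  have Mp: "prime_ideal_of D M" using Mf_prime[OF D st M(1)] .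
  have Mqp: "quasi_prime D sfD M" unfolding quasi_prime_def using Mf_quasi[OF M(1)] Mp by blast
  have fl: "flat_over (loc D (D - M)) (loc T (D - M))" using F Mqp by blast
  have Mm: "mclosed D (D - M)" using prime_mclosed[OF D Mp] .
  have M1: "1 \<in> D - M" using Mf_D_one[OF M(1)] .
  have Mmul: "\<And>s t. s \<in> D - M \<Longrightarrow> t \<in> D - M \<Longrightarrow> s * t \<in> D - M" using Mm unfolding mclosed_def by blast
  have M0: "0 \<notin> D - M" using Mm unfolding mclosed_def by blast
  have notQ: "\<And>w. w \<in> D - M \<Longrightarrow> w \<notin> Q" using M(2) by blast
  have DA: "D \<subseteq> loc D (D - M)" using loc_incl[OF M1] .
  have TB: "T \<subseteq> loc T (D - M)" using loc_incl[OF M1] .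
  have "T \<subseteq> loc D (D - (Q \<inter> D))"
  proof
    fix t assume t: "t \<in> T"
    obtain x y where xy: "x \<in> D" "y \<in> D" "y \<noteq> 0" "t = x / y" using frac by blast
    define a where "a = (\<lambda>i::nat. if i = 0 then y else - x)"
    define m where "m = (\<lambda>i::nat. if i = 0 then t else 1)"
    have "- x \<in> D" using sr_uminus[OF D xy(1)] .
    then have ha: "\<forall>i<2. a i \<in> loc D (D - M) \<and> m i \<in> loc T (D - M)"
      using DA TB xy(2) t sr1[OF T] unfolding a_def m_def by auto
    have hs: "(\<Sum>i<2. a i * m i) = 0"
      unfolding a_def m_def using xy by (simp add: numeral_2_eq_2)
    have "\<exists>k (b::nat \<Rightarrow> nat \<Rightarrow> 'k) yv. (\<forall>j<k. yv j \<in> loc T (D - M)) \<and> (\<forall>i<2. \<forall>j<k. b i j \<in> loc D (D - M)) \<and>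
           (\<forall>i<2. m i = (\<Sum>j<k. b i j * yv j)) \<and> (\<forall>j<k. (\<Sum>i<2. a i * b i j) = 0)"
      using fl ha hs unfolding flat_over_def by blast
    then obtain k and b :: "nat \<Rightarrow> nat \<Rightarrow> 'k" and yv where K:
      "\<forall>j<k. yv j \<in> loc T (D - M)" "\<forall>i<2. \<forall>j<k. b i j \<in> loc D (D - M)"
      "\<forall>i<2. m i = (\<Sum>j<k. b i j * yv j)" "\<forall>j<k. (\<Sum>i<2. a i * b i j) = 0" by blast
    have "m 1 = (\<Sum>j<k. b 1 j * yv j)" using K(3) by simp
    then have one: "1 = (\<Sum>j<k. b 1 j * yv j)" unfolding m_def by simp
    have tb: "b 0 j = t * b 1 j" if "j < k" for j
    proof -
      have "y * b 0 j + (- x) * b 1 j = 0" using K(4) that unfolding a_def by (simp add: numeral_2_eq_2)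
      then have "b 0 j = (x / y) * b 1 j" using xy(3) by (simp add: field_simps)
      then show ?thesis using xy(4) by simp
    qed
    define QB where "QB = {q / s | q s. q \<in> Q \<and> s \<in> D - M}"
    have QB0: "0 \<in> QB" unfolding QB_def using Q0 M1 by force
    have QBadd: "u + v \<in> QB" if uv: "u \<in> QB" "v \<in> QB" for u v
    proof -
      obtain q s where qs: "q \<in> Q" "s \<in> D - M" "u = q / s" using uv(1) unfolding QB_def by blast
      obtain q' s' where qs': "q' \<in> Q" "s' \<in> D - M" "v = q' / s'" using uv(2) unfolding QB_def by blast
      have nz: "s \<noteq> 0" "s' \<noteq> 0" using qs(2) qs'(2) M0 by auto
      have "u + v = (s' * q + s * q') / (s * s')" unfolding qs(3) qs'(3) using nz by (simp add: field_simps)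
      moreover have "s' * q + s * q' \<in> Q"
        using submod_add[OF ideal_submod[OF Qi]] submod_scal[OF ideal_submod[OF Qi]] qs qs' DT by blast
      moreover have "s * s' \<in> D - M" using Mmul qs(2) qs'(2) by blast
      ultimately show ?thesis unfolding QB_def by blast
    qed
    have QBmul: "u * w \<in> QB" if uw: "u \<in> QB" "w \<in> loc T (D - M)" for u w
    proof -
      obtain q s where qs: "q \<in> Q" "s \<in> D - M" "u = q / s" using uw(1) unfolding QB_def by blast
      obtain t' s' where ts: "t' \<in> T" "s' \<in> D - M" "w = t' / s'" using locE[OF uw(2)] by blast
      have "u * w = (t' * q) / (s * s')" unfolding qs(3) ts(3) by simp
      moreover have "t' * q \<in> Q" using submod_scal[OF ideal_submod[OF Qi]] qs ts by blast
      moreover have "s * s' \<in> D - M" using Mmul qs(2) ts(2) by blast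
      ultimately show ?thesis unfolding QB_def by blast
    qed
    have "\<exists>j<k. b 1 j \<notin> QB"
    proof (rule ccontr)
      assume "\<not> (\<exists>j<k. b 1 j \<notin> QB)"
      then have "\<forall>j<k. b 1 j * yv j \<in> QB" using QBmul K(1) by blast
      moreover have "submod {} QB" using submod_empty[OF QB0] QBadd by blast
      ultimately have "(\<Sum>j<k. b 1 j * yv j) \<in> QB" using submod_sum[of "{}" QB k "\<lambda>j. b 1 j * yv j"] by simp
      then have "1 \<in> QB" using one by simp
      then obtain q s where qs: "q \<in> Q" "s \<in> D - M" "1 = q / s" unfolding QB_def by blast
      have "s \<noteq> 0" using qs(2) M0 by auto
      then have "q = s" using qs(3) by (simp add: field_simps)
      then show False using qs notQ by blast
    qed
    then obtain j where j: "j < k" "b 1 j \<notin> QB" by blast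
    have "b 1 j \<in> loc D (D - M)" using K(2) j(1) by simp
    then obtain d s where ds: "d \<in> D" "s \<in> D - M" "b 1 j = d / s" using locE by blast
    have "b 0 j \<in> loc D (D - M)" using K(2) j(1) by simp
    then obtain e w where ew: "e \<in> D" "w \<in> D - M" "b 0 j = e / w" using locE by blast
    have dQ: "d \<notin> Q" using j(2) ds unfolding QB_def by blast
    have nz: "s \<noteq> 0" "w \<noteq> 0" "d \<noteq> 0" using ds(2) ew(2) M0 dQ Q0 by auto
    have "e / w = t * (d / s)" using tb[OF j(1)] ds(3) ew(3) by simp
    then have teq: "t = (e * s) / (w * d)" using nz by (simp add: field_simps)
    have "w * d \<notin> Q" using Qp notQ[OF ew(2)] dQ ew(2) ds(1) DT unfolding prime_ideal_of_def by blast
    moreover have "w * d \<in> D" "e * s \<in> D" using ew ds sr_mult[OF D] by auto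
    ultimately have "w * d \<in> D - (Q \<inter> D)" "e * s \<in> D" by auto
    then show "t \<in> loc D (D - (Q \<inter> D))" using teq locI by metis
  qed
  then show "loc D (D - (Q \<inter> D)) = loc T (T - Q)" using loc_eq[OF Qp] by blast
qed

end

theorem proposition4p4:
  fixes D T :: "'k::field set" and st st' :: "'k set \<Rightarrow> 'k set"
  assumes "domain_with_qf D" and "overring D T"
    and "semistar D st" and "semistar T st'"
  defines "c1 \<equiv> star_flat D T st st'"
    and "c2 \<equiv> linked D T st st' \<and>
       (\<forall>P. prime_ideal_of D P \<and> P \<noteq> {0} \<longrightarrow>
          star_f T st' (smult P T) = st' T \<or> T \<subseteq> loc D (D - P))"
    and "c3 \<equiv> linked D T st st' \<and>
       (\<forall>x\<in>T. x \<noteq> 0 \<longrightarrow> star_f T st' (smult {d \<in> D. d * x \<in> D} T) = st' T)"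
    and "c4 \<equiv> linked D T st st' \<and>
       tilde T st' T = \<Inter>{loc D (D - (Q \<inter> D)) | Q. Q \<in> Mf T st'}"
    and "c5 \<equiv> linked D T st st' \<and>
       (\<exists>\<Sigma>. mult_system D \<Sigma> \<and> tilde T st' T = gen_loc D st \<Sigma> \<and>
          (\<forall>I\<in>\<Sigma>. star_f T st' (smult I T) = st' T))"
    and "c6 \<equiv> linked D T st st' \<and>
       (\<forall>P. quasi_prime D (star_f D st) P \<longrightarrow> flat_over (loc D (D - P)) (loc T (D - P)))"
  shows "(c1 \<longleftrightarrow> c2) \<and> (c1 \<longleftrightarrow> c3) \<and> (c1 \<longleftrightarrow> c4) \<and> (c1 \<longleftrightarrow> c5) \<and> (c6 \<longrightarrow> c1)"
proof -
  interpret S: setting D T st st' using assms(1-4) by unfold_locales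
  have L: "c1 \<Longrightarrow> linked D T st st'" unfolding c1_def star_flat_def by blast
  have i12: "c1 \<Longrightarrow> c2" unfolding c2_def using L S.H S.c1_T c1_def by blast
  have i21: "c2 \<Longrightarrow> c1" unfolding c1_def c2_def using S.c2_c1 by blast
  have i13: "c1 \<Longrightarrow> c3" unfolding c3_def using L S.c1_c3 S.c1_T c1_def by blast
  have i31: "c3 \<Longrightarrow> c1" unfolding c1_def c3_def using S.c3_c1 by blast
  have i14: "c1 \<Longrightarrow> c4" unfolding c4_def using L S.c1_c4 c1_def by blast
  have i41: "c4 \<Longrightarrow> c1"
  proof -
    assume c4: c4
    have "linked D T st st'" using c4 unfolding c4_def by blast
    moreover have "\<forall>Q\<in>Mf T st'. T \<subseteq> loc D (D - (Q \<inter> D))" using S.c4_T c4 unfolding c4_def by blast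
    ultimately show c1 unfolding c1_def using S.c2_c1 S.H by blast
  qed
  have i15: "c1 \<Longrightarrow> c5" unfolding c5_def using L S.c1_c5 c1_def by blast
  have i51: "c5 \<Longrightarrow> c1"
  proof -
    assume c5: c5
    have Lk: "linked D T st st'" using c5 unfolding c5_def by blast
    obtain \<Sigma> where "mult_system D \<Sigma>" "tilde T st' T = gen_loc D st \<Sigma>"
      "\<forall>I\<in>\<Sigma>. star_f T st' (smult I T) = st' T" using c5 unfolding c5_def by blast
    then have "\<forall>Q\<in>Mf T st'. T \<subseteq> loc D (D - (Q \<inter> D))" using S.c5_T[OF Lk] by blast
    then show c1 unfolding c1_def using S.c2_c1[OF Lk] S.H by blast
  qed
  have i61: "c6 \<Longrightarrow> c1" unfolding c1_def c6_def using S.c6_c1 by blast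
  show ?thesis using i12 i21 i13 i31 i14 i41 i15 i51 i61 by blast
qed

end
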